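(* Let $G=H\oplus_3 K$ be a proper $3$-sum of $2$-connected cubic graphs $H$ and $K$ with distinguished vertices $u\in V(H)$ and $v\in V(K)$, where $\pi(H)\ge 5$, $K$ is $3$-edge-colourable, and $u$ is an apex of $H$. If $\pi(G)\ge 5$, then $K$ is quasi-bipartite and has a bipartising set $U$ such that $\{v\}$ is a component of $K-U$ (i.e. $v$ forms a trivial component of the quasi-partite set of $K$).
   Context: Graphs are finite; loops and multiple edges are allowed. The perfect matching index $\pi(G)$ of a bridgeless cubic graph is the smallest number of perfect matchings whose union is $E(G)$. A $3$-sum $H\oplus_3 K$ with distinguished vertices $u,v$ deletes $u$ and $v$ and joins the three dangling edge-ends formerly at $u$ bijectively to the three formerly at $v$; it is proper if neither $H$ nor $K$ is the $3$-dipole (two vertices joined by three parallel edges) and neither $u$ nor $v$ is incident with a pair of parallel edges. For a vertex $w$ of a $2$-connected cubic graph $X$ with no $3$-edge-colouring, $X^w$ denotes the graph obtained by inflating $w$ to a triangle (deleting $w$, adding a triangle on new vertices, attaching the three edge-ends formerly at $w$ to its three distinct vertices), and $w$ is an apex of $X$ if $\pi(X^w)=4$. A $2$-connected cubic graph $K$ is quasi-bipartite if it has an independent vertex set $U$ with $|U|\ge 2$ such that contracting each component of $K-U$ to a vertex yields a bipartite cubic graph (possibly with multiple edges) with partite sets $U$ and the set of contracted vertices; $U$ is a bipartising set and the components of $K-U$ form the quasi-partite set. *)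

theory Defs
  imports Main "HOL-Library.Multiset"
begin

text \<open>Finite multigraphs (loops and parallel edges allowed): every edge has a
  multiset of exactly two ends (a loop has the same end twice).\<close>

record ('v, 'e) mgraph =
  verts :: "'v set"
  edges :: "'e set"
  ends  :: "'e \<Rightarrow> 'v multiset"

definition wf_graph :: "('v, 'e) mgraph \<Rightarrow> bool" where
  "wf_graph G \<longleftrightarrow> finite (verts G) \<and> finite (edges G) \<and>
     (\<forall>e\<in>edges G. size (ends G e) = 2 \<and> set_mset (ends G e) \<subseteq> verts G)"

definition at :: "('v, 'e) mgraph \<Rightarrow> 'v \<Rightarrow> 'e set" where
  "at G x = {e \<in> edges G. x \<in># ends G e}"

text \<open>Degree: a loop counts twice.\<close>
definition deg :: "('v, 'e) mgraph \<Rightarrow> 'v \<Rightarrow> nat" where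
  "deg G x = (\<Sum>e\<in>edges G. count (ends G e) x)"

definition cubic :: "('v, 'e) mgraph \<Rightarrow> bool" where
  "cubic G \<longleftrightarrow> wf_graph G \<and> verts G \<noteq> {} \<and> (\<forall>x\<in>verts G. deg G x = 3)"

definition adj :: "('v, 'e) mgraph \<Rightarrow> 'v \<Rightarrow> 'v \<Rightarrow> bool" where
  "adj G x y \<longleftrightarrow> (\<exists>e\<in>edges G. ends G e = {#x, y#})"

definition reach :: "('v, 'e) mgraph \<Rightarrow> 'v \<Rightarrow> 'v \<Rightarrow> bool" where
  "reach G = (adj G)\<^sup>*\<^sup>*"

definition connected :: "('v, 'e) mgraph \<Rightarrow> bool" where
  "connected G \<longleftrightarrow> verts G \<noteq> {} \<and> (\<forall>x\<in>verts G. \<forall>y\<in>verts G. reach G x y)"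

definition del_edge :: "('v, 'e) mgraph \<Rightarrow> 'e \<Rightarrow> ('v, 'e) mgraph" where
  "del_edge G e = G\<lparr>edges := edges G - {e}\<rparr>"

definition del_verts :: "('v, 'e) mgraph \<Rightarrow> 'v set \<Rightarrow> ('v, 'e) mgraph" where
  "del_verts G U = \<lparr>verts = verts G - U,
                    edges = {e \<in> edges G. set_mset (ends G e) \<inter> U = {}},
                    ends = ends G\<rparr>"

definition two_connected :: "('v, 'e) mgraph \<Rightarrow> bool" where
  "two_connected G \<longleftrightarrow> connected G \<and> card (verts G) \<ge> 2 \<and>
     (\<forall>x\<in>verts G. connected (del_verts G {x})) \<and>
     (\<forall>e\<in>edges G. connected (del_edge G e))"

definition dipole3 :: "('v, 'e) mgraph \<Rightarrow> bool" where
  "dipole3 G \<longleftrightarrow> (\<exists>a b. a \<noteq> b \<and> verts G = {a, b} \<and> card (edges G) = 3 \<and>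
                     (\<forall>e\<in>edges G. ends G e = {#a, b#}))"

definition incident_parallel :: "('v, 'e) mgraph \<Rightarrow> 'v \<Rightarrow> bool" where
  "incident_parallel G x \<longleftrightarrow>
     (\<exists>e1\<in>edges G. \<exists>e2\<in>edges G. e1 \<noteq> e2 \<and> x \<in># ends G e1 \<and> ends G e1 = ends G e2)"

definition other :: "('v, 'e) mgraph \<Rightarrow> 'v \<Rightarrow> 'e \<Rightarrow> 'v" where
  "other G x e = (THE y. ends G e = {#x, y#})"

definition perfect_matching :: "('v, 'e) mgraph \<Rightarrow> 'e set \<Rightarrow> bool" where
  "perfect_matching G M \<longleftrightarrow> M \<subseteq> edges G \<and>
     (\<forall>e\<in>M. \<forall>x. count (ends G e) x \<le> 1) \<and>
     (\<forall>x\<in>verts G. card {e \<in> M. x \<in># ends G e} = 1)"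

definition pm_index :: "('v, 'e) mgraph \<Rightarrow> nat" where
  "pm_index G = (LEAST k. \<exists>Ms. length Ms = k \<and> (\<forall>M\<in>set Ms. perfect_matching G M) \<and>
                               \<Union>(set Ms) = edges G)"

definition colourable3 :: "('v, 'e) mgraph \<Rightarrow> bool" where
  "colourable3 G \<longleftrightarrow> (\<exists>c :: 'e \<Rightarrow> nat.
      (\<forall>e\<in>edges G. c e < 3) \<and>
      (\<forall>e\<in>edges G. \<forall>x. count (ends G e) x \<le> 1) \<and>
      (\<forall>e\<in>edges G. \<forall>e'\<in>edges G. e \<noteq> e' \<and> (\<exists>x. x \<in># ends G e \<and> x \<in># ends G e')
          \<longrightarrow> c e \<noteq> c e'))"

text \<open>3-sum H \<oplus>_3 K at u, v: the bijection phi maps the edges at u to the edges at v;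
  the edge e at u and phi e at v are joined into a single edge (represented by Inl e)
  between the other end of e in H and the other end of phi e in K.\<close>
definition sum3 :: "('v, 'e) mgraph \<Rightarrow> ('w, 'f) mgraph \<Rightarrow> 'v \<Rightarrow> 'w \<Rightarrow> ('e \<Rightarrow> 'f)
                     \<Rightarrow> ('v + 'w, 'e + 'f) mgraph" where
  "sum3 H K u v phi =
     \<lparr>verts = Inl ` (verts H - {u}) \<union> Inr ` (verts K - {v}),
      edges = Inl ` edges H \<union> Inr ` {f \<in> edges K. v \<notin># ends K f},
      ends = (\<lambda>d. case d of
                Inl e \<Rightarrow> (if u \<in># ends H e
                          then {# Inl (other H u e), Inr (other K v (phi e)) #}
                          else image_mset Inl (ends H e))
              | Inr f \<Rightarrow> image_mset Inr (ends K f))\<rparr>"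

text \<open>X^w: inflate w to a triangle. The new vertex Inr e carries the edge-end of e
  formerly at w; triangle edges are Inr {e1,e2}.\<close>
definition inflate :: "('v, 'e) mgraph \<Rightarrow> 'v \<Rightarrow> ('v + 'e, 'e + 'e set) mgraph" where
  "inflate X w =
     \<lparr>verts = Inl ` (verts X - {w}) \<union> Inr ` at X w,
      edges = Inl ` edges X \<union> Inr ` {{e1, e2} | e1 e2. e1 \<in> at X w \<and> e2 \<in> at X w \<and> e1 \<noteq> e2},
      ends = (\<lambda>d. case d of
                Inl e \<Rightarrow> (if w \<in># ends X e
                          then {# Inl (other X w e), Inr e #}
                          else image_mset Inl (ends X e))
              | Inr s \<Rightarrow> image_mset Inr (mset_set s))\<rparr>"

definition apex :: "('v, 'e) mgraph \<Rightarrow> 'v \<Rightarrow> bool" where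
  "apex X w \<longleftrightarrow> cubic X \<and> two_connected X \<and> \<not> colourable3 X \<and> w \<in> verts X \<and>
                pm_index (inflate X w) = 4"

definition comp_of :: "('v, 'e) mgraph \<Rightarrow> 'v \<Rightarrow> 'v set" where
  "comp_of G x = {y \<in> verts G. reach G x y}"

definition comps :: "('v, 'e) mgraph \<Rightarrow> 'v set set" where
  "comps G = comp_of G ` verts G"

definition independent :: "('v, 'e) mgraph \<Rightarrow> 'v set \<Rightarrow> bool" where
  "independent G U \<longleftrightarrow> U \<subseteq> verts G \<and> (\<forall>e\<in>edges G. \<not> set_mset (ends G e) \<subseteq> U)"

definition contract :: "('v, 'e) mgraph \<Rightarrow> 'v set \<Rightarrow> ('v + 'v set, 'e) mgraph" where
  "contract K U =
     \<lparr>verts = Inl ` U \<union> Inr ` comps (del_verts K U),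
      edges = {e \<in> edges K. \<not> (\<exists>C\<in>comps (del_verts K U). set_mset (ends K e) \<subseteq> C)},
      ends = (\<lambda>e. image_mset (\<lambda>x. if x \<in> U then Inl x else Inr (comp_of (del_verts K U) x))
                              (ends K e))\<rparr>"

definition bipartising_set :: "('v, 'e) mgraph \<Rightarrow> 'v set \<Rightarrow> bool" where
  "bipartising_set K U \<longleftrightarrow> independent K U \<and> card U \<ge> 2 \<and>
     cubic (contract K U) \<and>
     (\<forall>e\<in>edges (contract K U). \<exists>a\<in>U. \<exists>C\<in>comps (del_verts K U).
         ends (contract K U) e = {# Inl a, Inr C #})"

definition quasi_bipartite :: "('v, 'e) mgraph \<Rightarrow> bool" where
  "quasi_bipartite K \<longleftrightarrow> cubic K \<and> two_connected K \<and> (\<exists>U. bipartising_set K U)"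

end

theory Submission
  imports Defs
begin


definition srel :: "('a \<Rightarrow> 'a \<Rightarrow> bool) \<Rightarrow> 'a set \<Rightarrow> 'a \<Rightarrow> 'a \<Rightarrow> bool" where
  "srel E W a b \<longleftrightarrow> a \<in> W \<and> b \<in> W \<and> E a b"

definition cmp :: "('a \<Rightarrow> 'a \<Rightarrow> bool) \<Rightarrow> 'a set \<Rightarrow> 'a \<Rightarrow> 'a set" where
  "cmp E W x = {y \<in> W. (srel E W)\<^sup>*\<^sup>* x y}"

definition cmps :: "('a \<Rightarrow> 'a \<Rightarrow> bool) \<Rightarrow> 'a set \<Rightarrow> 'a set set" where
  "cmps E W = cmp E W ` W"

definition oddc :: "('a \<Rightarrow> 'a \<Rightarrow> bool) \<Rightarrow> 'a set \<Rightarrow> nat" where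
  "oddc E W = card {C \<in> cmps E W. odd (card C)}"

definition pmatch :: "('a \<Rightarrow> 'a \<Rightarrow> bool) \<Rightarrow> 'a set \<Rightarrow> ('a \<Rightarrow> 'a) \<Rightarrow> bool" where
  "pmatch E W m \<longleftrightarrow> (\<forall>x\<in>W. m x \<in> W \<and> m x \<noteq> x \<and> m (m x) = x \<and> E x (m x))"

lemma srel_sym: "symp E \<Longrightarrow> srel E W a b \<Longrightarrow> srel E W b a"
  unfolding srel_def by (meson sympD)

lemma rt_sym: assumes "symp E" "(srel E W)\<^sup>*\<^sup>* a b" shows "(srel E W)\<^sup>*\<^sup>* b a"
  using assms(2)
proof (induction rule: rtranclp_induct)
  case base then show ?case by simp
next
  case (step y z)
  thus ?case using srel_sym[OF assms(1) step(2)] by (metis converse_rtranclp_into_rtranclp)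
qed

lemma cmp_sub: "cmp E W x \<subseteq> W" unfolding cmp_def by auto

lemma cmp_self: "x \<in> W \<Longrightarrow> x \<in> cmp E W x" unfolding cmp_def by auto

lemma cmp_eq: assumes "symp E" "y \<in> cmp E W x" shows "cmp E W y = cmp E W x"
proof -
  have r: "(srel E W)\<^sup>*\<^sup>* x y" using assms(2) unfolding cmp_def by auto
  hence r': "(srel E W)\<^sup>*\<^sup>* y x" using rt_sym assms(1) by metis
  show ?thesis unfolding cmp_def using r r' by (auto intro: rtranclp_trans)
qed

lemma cmps_disj: assumes "symp E" "C \<in> cmps E W" "D \<in> cmps E W" "C \<noteq> D" shows "C \<inter> D = {}"
proof (rule ccontr)
  assume "C \<inter> D \<noteq> {}"
  then obtain z where z: "z \<in> C" "z \<in> D" by auto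
  obtain x y where "C = cmp E W x" "D = cmp E W y" using assms unfolding cmps_def by auto
  thus False using cmp_eq[OF assms(1)] z assms(4) by metis
qed

lemma Union_cmps: "\<Union> (cmps E W) = W"
  unfolding cmps_def using cmp_sub cmp_self by fastforce

lemma cmps_ne: "C \<in> cmps E W \<Longrightarrow> C \<noteq> {}"
  unfolding cmps_def using cmp_self by fastforce

lemma cmps_sub: "C \<in> cmps E W \<Longrightarrow> C \<subseteq> W"
  unfolding cmps_def using cmp_sub by fastforce

lemma cmps_finite: "finite W \<Longrightarrow> finite (cmps E W)" unfolding cmps_def by auto

lemma cmps_elem: "symp E \<Longrightarrow> C \<in> cmps E W \<Longrightarrow> x \<in> C \<Longrightarrow> C = cmp E W x"
  unfolding cmps_def using cmp_eq by fastforce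

lemma cmp_in_cmps: "x \<in> W \<Longrightarrow> cmp E W x \<in> cmps E W" unfolding cmps_def by auto

lemma cmps_closed: assumes "symp E" "C \<in> cmps E W" "a \<in> C" "b \<in> W" "E a b" shows "b \<in> C"
proof -
  have C: "C = cmp E W a" using cmps_elem assms by metis
  have "a \<in> W" using assms cmps_sub by blast
  hence "srel E W a b" using assms unfolding srel_def by auto
  hence "(srel E W)\<^sup>*\<^sup>* a b" by auto
  thus ?thesis using C assms(4) unfolding cmp_def by auto
qed

lemma cmp_mono: "V \<subseteq> W \<Longrightarrow> cmp E V x \<subseteq> cmp E W x"
proof
  fix y assume "V \<subseteq> W" "y \<in> cmp E V x"
  hence "(srel E V)\<^sup>*\<^sup>* x y" "y \<in> W" unfolding cmp_def by auto
  moreover have "(srel E V)\<^sup>*\<^sup>* x y \<Longrightarrow> (srel E W)\<^sup>*\<^sup>* x y"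
    by (rule rtranclp_mono[THEN predicate2D]) (use \<open>V \<subseteq> W\<close> in \<open>auto simp: srel_def\<close>)
  ultimately show "y \<in> cmp E W x" unfolding cmp_def by auto
qed

lemma cmp_restrict:
  assumes "A \<subseteq> W" "x \<in> A" "\<forall>a\<in>A. \<forall>b\<in>W. E a b \<longrightarrow> b \<in> A"
  shows "cmp E W x = cmp E A x"
proof
  show "cmp E A x \<subseteq> cmp E W x" using cmp_mono assms(1) by metis
next
  have "(srel E W)\<^sup>*\<^sup>* x y \<Longrightarrow> y \<in> A \<and> (srel E A)\<^sup>*\<^sup>* x y" for y
  proof (induction rule: rtranclp_induct)
    case base then show ?case using assms(2) by auto
  next
    case (step y z)
    have zA: "z \<in> A" using step.IH step.hyps(2) assms(3) unfolding srel_def by blast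
    hence "srel E A y z" using step unfolding srel_def by auto
    thus ?case using step zA by auto
  qed
  thus "cmp E W x \<subseteq> cmp E A x" unfolding cmp_def by auto
qed

lemma cmps_self: assumes "symp E" "C \<in> cmps E W" "x \<in> C" shows "cmp E C x = C"
proof -
  have "C = cmp E W x" using cmps_elem assms by metis
  moreover have "cmp E W x = cmp E C x"
    by (rule cmp_restrict) (use assms cmps_sub cmps_closed in \<open>auto\<close>)
  ultimately show ?thesis by simp
qed

lemma cmps_local:
  assumes sy: "symp E" and C: "C \<in> cmps E W" and D: "D \<subseteq> C"
  shows "cmps E (W - D) = (cmps E W - {C}) \<union> cmps E (C - D)"
proof -
  have CW: "C \<subseteq> W" using C cmps_sub by auto
  have A: "cmp E (W - D) y = cmp E W y" if y: "y \<in> W" "y \<notin> C" for y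
  proof -
    let ?A = "cmp E W y"
    have AC: "?A \<in> cmps E W" using cmp_in_cmps[OF y(1)] .
    have Acl: "\<forall>a\<in>?A. \<forall>b\<in>W. E a b \<longrightarrow> b \<in> ?A"
      using cmps_closed[OF sy AC] by blast
    have yA: "y \<in> ?A" using cmp_self[OF y(1)] .
    have ne: "?A \<noteq> C" using yA y(2) by metis
    have dis: "?A \<inter> C = {}" using cmps_disj[OF sy AC C ne] .
    have sub: "?A \<subseteq> W - D" using dis D cmp_sub[of E W y] by blast
    have cl2: "\<forall>a\<in>?A. \<forall>b\<in>W - D. E a b \<longrightarrow> b \<in> ?A" using Acl by blast
    have "cmp E (W - D) y = cmp E ?A y" using cmp_restrict[OF sub yA cl2] .
    also have "\<dots> = ?A" using cmps_self[OF sy AC yA] .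
    finally show ?thesis .
  qed
  have B: "cmp E (W - D) y = cmp E (C - D) y" if y: "y \<in> C - D" for y
  proof -
    have sub: "C - D \<subseteq> W - D" using CW by blast
    have cl: "\<forall>a\<in>C - D. \<forall>b\<in>W - D. E a b \<longrightarrow> b \<in> C - D"
      using cmps_closed[OF sy C] by blast
    show ?thesis using cmp_restrict[OF sub y cl] .
  qed
  show ?thesis
  proof
    show "cmps E (W - D) \<subseteq> (cmps E W - {C}) \<union> cmps E (C - D)"
    proof
      fix X assume "X \<in> cmps E (W - D)"
      then obtain y where y: "y \<in> W - D" "X = cmp E (W - D) y" unfolding cmps_def by auto
      show "X \<in> (cmps E W - {C}) \<union> cmps E (C - D)"
      proof (cases "y \<in> C")
        case True
        hence yy: "y \<in> C - D" using y by blast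
        have "X = cmp E (C - D) y" using B[OF yy] y(2) by simp
        thus ?thesis using cmp_in_cmps[OF yy, of E] by (simp only: Un_iff) simp
      next
        case False
        have yW: "y \<in> W" using y by blast
        have X: "X = cmp E W y" using A[OF yW False] y(2) by simp
        have "X \<noteq> C" using False cmp_self[OF yW, of E] X by blast
        thus ?thesis using X cmp_in_cmps[OF yW, of E] by simp
      qed
    qed
  next
    show "(cmps E W - {C}) \<union> cmps E (C - D) \<subseteq> cmps E (W - D)"
    proof
      fix X assume X: "X \<in> (cmps E W - {C}) \<union> cmps E (C - D)"
      show "X \<in> cmps E (W - D)"
      proof (cases "X \<in> cmps E (C - D)")
        case True
        then obtain y where y: "y \<in> C - D" "X = cmp E (C - D) y" unfolding cmps_def by auto
        have yW: "y \<in> W - D" using y(1) CW by blast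
        have "X = cmp E (W - D) y" using B[OF y(1)] y(2) by simp
        thus ?thesis using cmp_in_cmps[OF yW, of E] by simp
      next
        case False
        hence X1: "X \<in> cmps E W" "X \<noteq> C" using X by auto
        then obtain y where y: "y \<in> X" using cmps_ne by blast
        have yW: "y \<in> W" using X1 y cmps_sub by blast
        have yC: "y \<notin> C" using cmps_disj[OF sy X1(1) C X1(2)] y by blast
        have yWD: "y \<in> W - D" using yW yC D by blast
        have "X = cmp E (W - D) y" using A[OF yW yC] cmps_elem[OF sy X1(1) y] by simp
        thus ?thesis using cmp_in_cmps[OF yWD, of E] by simp
      qed
    qed
  qed
qed

lemma even_sum_card: "finite F \<Longrightarrow> even (\<Sum>C\<in>F. f C :: nat) = even (card {C\<in>F. odd (f C)})"
proof (induction F rule: finite_induct)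
  case empty then show ?case by simp
next
  case (insert x F)
  let ?S = "{C \<in> F. odd (f C)}"
  have fS: "finite ?S" "x \<notin> ?S" using insert by auto
  have s: "sum f (insert x F) = f x + sum f F" using insert by simp
  show ?case
  proof (cases "odd (f x)")
    case True
    hence "{C \<in> insert x F. odd (f C)} = insert x ?S" by auto
    hence "card {C \<in> insert x F. odd (f C)} = Suc (card ?S)" using fS by simp
    thus ?thesis unfolding s using insert.IH True by simp
  next
    case False
    hence "{C \<in> insert x F. odd (f C)} = ?S" by auto
    thus ?thesis unfolding s using insert.IH False by simp
  qed
qed

lemma card_cmps_sum: assumes "symp E" "finite W" shows "card W = (\<Sum>C\<in>cmps E W. card C)"
proof -
  have "card (\<Union>(cmps E W)) = (\<Sum>C\<in>cmps E W. card C)"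
  proof (rule card_Union_disjoint)
    show "pairwise disjnt (cmps E W)"
    proof (rule pairwiseI)
      fix A B assume "A \<in> cmps E W" "B \<in> cmps E W" "A \<noteq> B"
      thus "disjnt A B" unfolding disjnt_def using cmps_disj[OF assms(1)] by metis
    qed
    show "finite A" if "A \<in> cmps E W" for A using finite_subset[OF cmps_sub[OF that] assms(2)] .
  qed
  thus ?thesis using Union_cmps[of E W] by simp
qed

lemma oddc_parity: assumes "symp E" "finite W" shows "even (oddc E W) = even (card W)"
  using card_cmps_sum[OF assms] even_sum_card[OF cmps_finite[OF assms(2)], of card E] unfolding oddc_def by simp

lemma oddc_local:
  assumes sy: "symp E" and fin: "finite W" and C: "C \<in> cmps E W" and D: "D \<subseteq> C"
  shows "oddc E (W - D) + (if odd (card C) then 1 else 0) = oddc E W + oddc E (C - D)"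
proof -
  have CW: "C \<subseteq> W" using C cmps_sub by auto
  have dis: "(cmps E W - {C}) \<inter> cmps E (C - D) = {}"
  proof (rule ccontr)
    assume "(cmps E W - {C}) \<inter> cmps E (C - D) \<noteq> {}"
    then obtain X where X: "X \<in> cmps E W" "X \<noteq> C" "X \<in> cmps E (C - D)" by auto
    then obtain y where "y \<in> X" using cmps_ne by blast
    hence "y \<in> C" using X cmps_sub by auto
    thus False using cmps_disj[OF sy X(1) C X(2)] \<open>y \<in> X\<close> by auto
  qed
  have f1: "finite (cmps E W)" using cmps_finite fin by auto
  have f2: "finite (cmps E (C - D))" using cmps_finite fin CW finite_subset by (metis finite_Diff)
  let ?o = "\<lambda>F. {X \<in> F. odd (card X)}"
  have "?o (cmps E (W - D)) = ?o (cmps E W - {C}) \<union> ?o (cmps E (C - D))"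
    using cmps_local[OF sy C D] by auto
  hence e1: "oddc E (W - D) = card (?o (cmps E W - {C})) + card (?o (cmps E (C - D)))"
    unfolding oddc_def using dis f1 f2 by (subst card_Un_disjoint[symmetric]) auto
  have e2: "card (?o (cmps E W - {C})) + (if odd (card C) then 1 else 0) = oddc E W"
  proof -
    have "?o (cmps E W - {C}) = ?o (cmps E W) - {C}" by auto
    moreover have "finite (?o (cmps E W))" using f1 by auto
    moreover have "card (?o (cmps E W)) = Suc (card (?o (cmps E W) - {C}))" if "odd (card C)"
      using card.remove[of "?o (cmps E W)" C] C that f1 by auto
    ultimately show ?thesis unfolding oddc_def
      by (cases "odd (card C)") auto
  qed
  have e3: "oddc E (C - D) = card (?o (cmps E (C - D)))" unfolding oddc_def ..
  show ?thesis using e1 e2 e3 by linarith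
qed


lemma hall:
  fixes N :: "'a \<Rightarrow> 'b set"
  assumes "finite A" "\<forall>a\<in>A. finite (N a)" "\<forall>X\<subseteq>A. card X \<le> card (\<Union>(N ` X))"
  shows "\<exists>f. inj_on f A \<and> (\<forall>a\<in>A. f a \<in> N a)"
  using assms
proof (induction "card A" arbitrary: A N rule: less_induct)
  case less
  note fA = less.prems(1) and fN = less.prems(2) and hc = less.prems(3)
  show ?case
  proof (cases "A = {}")
    case True then show ?thesis by auto
  next
    case Ane: False
    show ?thesis
    proof (cases "\<exists>X. X \<subseteq> A \<and> X \<noteq> {} \<and> X \<noteq> A \<and> card (\<Union>(N ` X)) = card X")
      case True
      then obtain X where X: "X \<subseteq> A" "X \<noteq> {}" "X \<noteq> A" "card (\<Union>(N ` X)) = card X" by blast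
      let ?R = "\<Union>(N ` X)"
      have fX: "finite X" using X(1) fA finite_subset by blast
      have fR: "finite ?R" using fX fN X(1) by blast
      have cX: "card X < card A" using X(1,3) fA by (meson psubsetI psubset_card_mono)
      have hX: "\<forall>Y\<subseteq>X. card Y \<le> card (\<Union>(N ` Y))" using hc X(1) by blast
      obtain f1 where f1: "inj_on f1 X" "\<forall>a\<in>X. f1 a \<in> N a"
        using less.hyps[OF cX fX] fN X(1) hX by blast
      let ?N' = "\<lambda>a. N a - ?R"
      have cA: "card (A - X) < card A"
      proof -
        have "card X > 0" using X(2) fX by auto
        moreover have "card (A - X) = card A - card X" using card_Diff_subset[OF fX X(1)] .
        moreover have "card X \<le> card A" using card_mono[OF fA X(1)] .
        ultimately show ?thesis by linarith
      qed
      have fAX: "finite (A - X)" using fA by blast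
      have fN': "\<forall>a\<in>A - X. finite (?N' a)" using fN by blast
      have hN': "\<forall>Y\<subseteq>A - X. card Y \<le> card (\<Union>(?N' ` Y))"
      proof (intro allI impI)
        fix Y assume Y: "Y \<subseteq> A - X"
        have fY: "finite Y" using Y fAX finite_subset by blast
        have dYX: "Y \<inter> X = {}" using Y by blast
        have "card (Y \<union> X) \<le> card (\<Union>(N ` (Y \<union> X)))" using hc Y X(1) by (metis Diff_subset Un_subset_iff subset_trans)
        also have "\<Union>(N ` (Y \<union> X)) = \<Union>(?N' ` Y) \<union> ?R" by blast
        also have "card (\<Union>(?N' ` Y) \<union> ?R) \<le> card (\<Union>(?N' ` Y)) + card ?R" by (rule card_Un_le)
        finally have "card (Y \<union> X) \<le> card (\<Union>(?N' ` Y)) + card X" using X(4) by simp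
        moreover have "card (Y \<union> X) = card Y + card X" using card_Un_disjoint[OF fY fX dYX] .
        ultimately show "card Y \<le> card (\<Union>(?N' ` Y))" by simp
      qed
      obtain f2 where f2: "inj_on f2 (A - X)" "\<forall>a\<in>A - X. f2 a \<in> ?N' a"
        using less.hyps[OF cA fAX fN' hN'] by blast
      define f where "f a = (if a \<in> X then f1 a else f2 a)" for a
      have "inj_on f A"
      proof (rule inj_onI)
        fix a b assume ab: "a \<in> A" "b \<in> A" "f a = f b"
        show "a = b"
        proof (cases "a \<in> X"; cases "b \<in> X")
          assume "a \<in> X" "b \<in> X" thus ?thesis using ab f1(1) unfolding f_def by (simp add: inj_on_def)
        next
          assume "a \<notin> X" "b \<notin> X" thus ?thesis using ab f2(1) unfolding f_def by (simp add: inj_on_def)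
        next
          assume a: "a \<in> X" "b \<notin> X"
          hence "f a \<in> ?R" using f1(2) unfolding f_def by auto
          moreover have "f b \<notin> ?R" using a f2(2) ab unfolding f_def by auto
          ultimately show ?thesis using ab by simp
        next
          assume a: "a \<notin> X" "b \<in> X"
          hence "f b \<in> ?R" using f1(2) unfolding f_def by auto
          moreover have "f a \<in> N a - ?R" using a f2(2) ab(1) unfolding f_def by simp
          hence "f a \<notin> ?R" by blast
          ultimately show ?thesis using ab by simp
        qed
      qed
      moreover have "\<forall>a\<in>A. f a \<in> N a" using f1(2) f2(2) unfolding f_def by auto
      ultimately show ?thesis by blast
    next
      case False
      have strict: "card X < card (\<Union>(N ` X))" if X: "X \<subseteq> A" "X \<noteq> {}" "X \<noteq> A" for X
      proof -
        have "card X \<le> card (\<Union>(N ` X))" using hc X(1) by blast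
        moreover have "card (\<Union>(N ` X)) \<noteq> card X" using False X by blast
        ultimately show ?thesis by linarith
      qed
      obtain a where a: "a \<in> A" using Ane by blast
      have "card {a} \<le> card (\<Union>(N ` {a}))" using hc a by blast
      hence "N a \<noteq> {}" by auto
      then obtain b where b: "b \<in> N a" by blast
      let ?A' = "A - {a}"
      let ?N' = "\<lambda>x. N x - {b}"
      have cA: "card ?A' < card A" by (rule card_Diff1_less[OF fA a])
      have fA': "finite ?A'" using fA by blast
      have fN': "\<forall>x\<in>?A'. finite (?N' x)" using fN by blast
      have hN': "\<forall>Y\<subseteq>?A'. card Y \<le> card (\<Union>(?N' ` Y))"
      proof (intro allI impI)
        fix Y assume Y: "Y \<subseteq> ?A'"
        show "card Y \<le> card (\<Union>(?N' ` Y))"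
        proof (cases "Y = {}")
          case True then show ?thesis by simp
        next
          case False
          have YA: "Y \<subseteq> A" "Y \<noteq> A" using Y a by auto
          have fY: "finite Y" using YA fA finite_subset by blast
          have lt: "card Y < card (\<Union>(N ` Y))" using strict[OF YA(1) False YA(2)] .
          have fU: "finite (\<Union>(N ` Y))" using fN YA(1) by (intro finite_UN_I[OF fY]) auto
          have eq: "\<Union>(?N' ` Y) = \<Union>(N ` Y) - {b}" by (rule set_eqI) simp
          have "card (\<Union>(N ` Y)) \<le> card (\<Union>(N ` Y) - {b}) + 1"
          proof (cases "b \<in> \<Union>(N ` Y)")
            case True thus ?thesis using card.remove[OF fU True] by linarith
          qed simp
          hence "card Y \<le> card (\<Union>(N ` Y) - {b})" using lt by linarith
          thus ?thesis by (subst eq)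
        qed
      qed
      obtain f' where f': "inj_on f' ?A'" "\<forall>x\<in>?A'. f' x \<in> ?N' x"
        using less.hyps[OF cA fA' fN' hN'] by blast
      define f where "f x = (if x = a then b else f' x)" for x
      have "inj_on f A"
      proof (rule inj_onI)
        fix x y assume xy: "x \<in> A" "y \<in> A" "f x = f y"
        show "x = y"
        proof (cases "x = a"; cases "y = a")
          assume "x \<noteq> a" "y \<noteq> a" thus ?thesis using xy f'(1) unfolding f_def by (simp add: inj_on_def)
        next
          assume h: "x = a" "y \<noteq> a"
          hence "f y \<noteq> b" using f'(2) xy unfolding f_def by auto
          thus ?thesis using xy h unfolding f_def by simp
        next
          assume h: "x \<noteq> a" "y = a"
          hence "f x \<noteq> b" using f'(2) xy unfolding f_def by auto
          thus ?thesis using xy h unfolding f_def by simp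
        qed simp
      qed
      moreover have "\<forall>x\<in>A. f x \<in> N x" using f'(2) b unfolding f_def by auto
      ultimately show ?thesis by blast
    qed
  qed
qed


lemma par1: "odd (c::nat) \<Longrightarrow> t \<le> c - 1 \<Longrightarrow> even (c - 1 - t) = even t"
  by (auto elim!: oddE simp: even_diff_nat)
lemma par2: "even (a::nat) = even t \<Longrightarrow> a > t \<Longrightarrow> a \<ge> t + 2"
  by (metis Suc_leI add_2_eq_Suc' even_Suc le_neq_implies_less not_le)

theorem tutte:
  assumes sy: "symp E"
  shows "finite W \<Longrightarrow> \<forall>S\<subseteq>W. oddc E (W - S) \<le> card S \<Longrightarrow> \<exists>m. pmatch E W m"
proof (induction "card W" arbitrary: W rule: less_induct)
  case less
  note fW = less.prems(1) and tcW = less.prems(2)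
  define good where "good S \<longleftrightarrow> S \<subseteq> W \<and> oddc E (W - S) = card S" for S
  have g0: "good {}" using tcW unfolding good_def by fastforce
  have bnd: "\<forall>S. good S \<longrightarrow> card S < Suc (card W)"
    unfolding good_def using card_mono[OF fW] by (simp add: less_Suc_eq_le)
  obtain S where gS: "good S" and maxS: "\<forall>S'. good S' \<longrightarrow> card S' \<le> card S"
    using ex_has_greatest_nat[of good "{}" card "Suc (card W)"] g0 bnd by blast
  have SW: "S \<subseteq> W" and oS: "oddc E (W - S) = card S" using gS unfolding good_def by auto
  have fS: "finite S" using finite_subset[OF SW fW] .
  define X where "X = W - S"
  have fX: "finite X" using fW X_def by simp
  have XW: "X \<subseteq> W" using X_def by blast
  have ext: False if C: "C \<in> cmps E X" and D: "D \<subseteq> C" "D \<noteq> {}"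
      and big: "oddc E (X - D) \<ge> card S + card D" for C D
  proof -
    have CX: "C \<subseteq> X" using cmps_sub[OF C] .
    have e: "X - D = W - (S \<union> D)" using X_def by blast
    have dis: "S \<inter> D = {}" using D CX X_def by blast
    have fD: "finite D" using finite_subset[OF _ fX] D CX by (meson order_trans)
    have cu: "card (S \<union> D) = card S + card D" using card_Un_disjoint[OF fS fD dis] .
    have sub: "S \<union> D \<subseteq> W" using SW D CX XW by blast
    have "oddc E (W - (S \<union> D)) \<le> card (S \<union> D)" using tcW sub by blast
    hence "good (S \<union> D)" using big e cu sub unfolding good_def by simp
    hence "card (S \<union> D) \<le> card S" using maxS by blast
    moreover have "card D > 0" using fD D(2) card_gt_0_iff by blast
    ultimately show False using cu by simp
  qed
  have allodd: "odd (card C)" if C: "C \<in> cmps E X" for C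
  proof (rule ccontr)
    assume ev: "\<not> odd (card C)"
    obtain x where x: "x \<in> C" using cmps_ne[OF C] by blast
    have CX: "C \<subseteq> X" using cmps_sub[OF C] .
    have fC: "finite C" using finite_subset[OF CX fX] .
    have "card C > 0" using fC x card_gt_0_iff by blast
    hence "odd (card C - 1)" using ev by presburger
    hence "odd (card (C - {x}))" using card_Diff_singleton[OF x] by simp
    hence "odd (oddc E (C - {x}))" using oddc_parity[OF sy, of "C - {x}"] fC by simp
    hence o1: "oddc E (C - {x}) \<ge> 1" using odd_pos by fastforce
    have "oddc E (X - {x}) + (if odd (card C) then 1 else 0) = oddc E X + oddc E (C - {x})"
      using oddc_local[OF sy fX C, of "{x}"] x by simp
    hence "oddc E (X - {x}) \<ge> card S + card {x}" using ev o1 oS X_def by simp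
    thus False using ext[OF C _ _] x by blast
  qed
  have fc: "\<exists>m. pmatch E (C - {x}) m" if C: "C \<in> cmps E X" and x: "x \<in> C" for C x
  proof -
    have oC: "odd (card C)" using allodd[OF C] .
    have CX: "C \<subseteq> X" using cmps_sub[OF C] .
    have fC: "finite C" using finite_subset[OF CX fX] .
    have fCx: "finite (C - {x})" using fC by simp
    have lt: "card (C - {x}) < card W"
    proof -
      have "card (C - {x}) < card C" using card_Diff1_less[OF fC x] .
      moreover have "card C \<le> card W" using card_mono[OF fW] CX XW by blast
      ultimately show ?thesis by simp
    qed
    have tcC: "\<forall>T\<subseteq>C - {x}. oddc E (C - {x} - T) \<le> card T"
    proof (intro allI impI)
      fix T assume T: "T \<subseteq> C - {x}"
      show "oddc E (C - {x} - T) \<le> card T"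
      proof (rule ccontr)
        assume "\<not> oddc E (C - {x} - T) \<le> card T"
        hence gt: "oddc E (C - {x} - T) > card T" by simp
        have fT: "finite T" using finite_subset[OF T fCx] .
        have cc: "card (C - {x} - T) = card C - 1 - card T"
          using card_Diff_subset[OF fT T] card_Diff_singleton[OF x] by simp
        have "card T \<le> card C - 1" using card_mono[OF fCx T] card_Diff_singleton[OF x] by simp
        hence "even (card (C - {x} - T)) = even (card T)" using cc par1[OF oC] by simp
        hence "even (oddc E (C - {x} - T)) = even (card T)"
          using oddc_parity[OF sy, of "C - {x} - T"] fC by simp
        hence g2: "oddc E (C - {x} - T) \<ge> card T + 2" using par2 gt by blast
        let ?D = "insert x T"
        have D: "?D \<subseteq> C" "?D \<noteq> {}" using T x by auto
        have eqD: "C - ?D = C - {x} - T" by blast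
        have "oddc E (X - ?D) + (if odd (card C) then 1 else 0) = oddc E X + oddc E (C - ?D)"
          using oddc_local[OF sy fX C D(1)] .
        hence "oddc E (X - ?D) + 1 = card S + oddc E (C - {x} - T)" using oC oS X_def eqD by simp
        moreover have "x \<notin> T" using T by blast
        hence "card ?D = card T + 1" using card_insert_disjoint[OF fT] by simp
        ultimately have "oddc E (X - ?D) \<ge> card S + card ?D" using g2 by simp
        thus False using ext[OF C D] by blast
      qed
    qed
    show ?thesis using less.hyps[OF lt fCx tcC] .
  qed
  define N where "N C = {s\<in>S. \<exists>y\<in>C. E s y}" for C
  have fcm: "finite (cmps E X)" using cmps_finite[OF fX] .
  have hallc: "\<forall>A\<subseteq>cmps E X. card A \<le> card (\<Union>(N ` A))"
  proof (intro allI impI)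
    fix A assume A: "A \<subseteq> cmps E X"
    define T where "T = \<Union>(N ` A)"
    have TS: "T \<subseteq> S" unfolding T_def N_def by blast
    have sub: "A \<subseteq> {C \<in> cmps E (W - T). odd (card C)}"
    proof
      fix C assume CA: "C \<in> A"
      have C: "C \<in> cmps E X" using A CA by blast
      obtain y where y: "y \<in> C" using cmps_ne[OF C] by blast
      have CX: "C \<subseteq> X" using cmps_sub[OF C] .
      have CWT: "C \<subseteq> W - T" using CX TS X_def by blast
      have cl: "\<forall>a\<in>C. \<forall>b\<in>W - T. E a b \<longrightarrow> b \<in> C"
      proof (intro ballI impI)
        fix a b assume a: "a \<in> C" and b: "b \<in> W - T" and ab: "E a b"
        have ba: "E b a" using sy ab by (meson sympD)
        show "b \<in> C"
        proof (cases "b \<in> S")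
          case True
          hence "b \<in> N C" unfolding N_def using a ba by blast
          hence "b \<in> T" unfolding T_def using CA by blast
          thus ?thesis using b by blast
        next
          case False
          hence "b \<in> X" using b X_def by blast
          thus ?thesis using cmps_closed[OF sy C a _ ab] by blast
        qed
      qed
      have "cmp E (W - T) y = cmp E C y" using cmp_restrict[OF CWT y cl] .
      also have "\<dots> = C" using cmps_self[OF sy C y] .
      finally have "C = cmp E (W - T) y" by simp
      moreover have "y \<in> W - T" using CWT y by blast
      ultimately have "C \<in> cmps E (W - T)" using cmp_in_cmps by metis
      thus "C \<in> {C \<in> cmps E (W - T). odd (card C)}" using allodd[OF C] by blast
    qed
    have "card A \<le> card {C \<in> cmps E (W - T). odd (card C)}"
      using card_mono[OF _ sub] cmps_finite[of "W - T" E] fW by simp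
    also have "\<dots> = oddc E (W - T)" unfolding oddc_def ..
    also have "\<dots> \<le> card T" using tcW TS SW by blast
    finally show "card A \<le> card (\<Union>(N ` A))" unfolding T_def .
  qed
  have fN: "\<forall>C\<in>cmps E X. finite (N C)" unfolding N_def using fS by simp
  obtain f where finj: "inj_on f (cmps E X)" and fN2: "\<forall>C\<in>cmps E X. f C \<in> N C"
    using hall[OF fcm fN hallc] by blast
  have ccard: "card (cmps E X) = card S"
  proof -
    have "{C \<in> cmps E X. odd (card C)} = cmps E X" using allodd by blast
    thus ?thesis using oS X_def unfolding oddc_def by simp
  qed
  have fimg: "f ` cmps E X = S"
  proof (rule card_subset_eq[OF fS])
    show "f ` cmps E X \<subseteq> S" using fN2 unfolding N_def by blast
    show "card (f ` cmps E X) = card S" using card_image[OF finj] ccard by simp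
  qed
  have "\<forall>C\<in>cmps E X. \<exists>y. y \<in> C \<and> E (f C) y" using fN2 unfolding N_def by blast
  then obtain yc where yc: "\<forall>C\<in>cmps E X. yc C \<in> C \<and> E (f C) (yc C)" by metis
  have "\<forall>C\<in>cmps E X. \<exists>m. pmatch E (C - {yc C}) m" using fc yc by blast
  then obtain mc where mc: "\<forall>C\<in>cmps E X. pmatch E (C - {yc C}) (mc C)" by metis
  define g where "g = inv_into (cmps E X) f"
  define m where "m z = (if z \<in> S then yc (g z) else if z = yc (cmp E X z) then f (cmp E X z)
                          else mc (cmp E X z) z)" for z
  have "pmatch E W m" unfolding pmatch_def
  proof
    fix z assume zW: "z \<in> W"
    show "m z \<in> W \<and> m z \<noteq> z \<and> m (m z) = z \<and> E z (m z)"
    proof (cases "z \<in> S")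
      case True
      let ?C = "g z"
      have C: "?C \<in> cmps E X" unfolding g_def using True fimg by (metis inv_into_into)
      have fC: "f ?C = z" unfolding g_def using True fimg by (metis f_inv_into_f)
      have mz: "m z = yc ?C" unfolding m_def using True by simp
      have yC: "yc ?C \<in> ?C" using yc C by blast
      have yX: "yc ?C \<in> X" using yC cmps_sub[OF C] by blast
      have cy: "cmp E X (yc ?C) = ?C" using cmps_elem[OF sy C yC] by simp
      have "m (yc ?C) = f ?C" unfolding m_def using yX X_def cy by simp
      thus ?thesis using mz fC yX X_def yc C True by auto
    next
      case False
      hence zX: "z \<in> X" using zW X_def by blast
      let ?C = "cmp E X z"
      have C: "?C \<in> cmps E X" using cmp_in_cmps[OF zX] .
      have zC: "z \<in> ?C" using cmp_self[OF zX] .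
      show ?thesis
      proof (cases "z = yc ?C")
        case True
        have mz: "m z = f ?C" unfolding m_def using False True by simp
        have fS': "f ?C \<in> S" using fimg C by blast
        have "g (f ?C) = ?C" unfolding g_def using inv_into_f_f[OF finj C] .
        hence "m (f ?C) = yc ?C" unfolding m_def using fS' by simp
        moreover have "E z (f ?C)" using yc C True sy by (metis sympD)
        ultimately show ?thesis using mz fS' SW True False by auto
      next
        case nyc: False
        have zC': "z \<in> ?C - {yc ?C}" using zC nyc by blast
        have pm: "pmatch E (?C - {yc ?C}) (mc ?C)" using mc C by blast
        hence pz: "mc ?C z \<in> ?C - {yc ?C}" "mc ?C z \<noteq> z" "mc ?C (mc ?C z) = z" "E z (mc ?C z)"
          using zC' unfolding pmatch_def by auto
        have mz: "m z = mc ?C z" unfolding m_def using False nyc by simp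
        have mX: "mc ?C z \<in> X" using pz(1) cmps_sub[OF C] by blast
        have cm: "cmp E X (mc ?C z) = ?C" using cmps_elem[OF sy C] pz(1) by simp
        have "m (mc ?C z) = mc ?C (mc ?C z)" unfolding m_def using mX X_def cm pz(1) by simp
        thus ?thesis using mz pz mX XW by auto
      qed
    qed
  qed
  thus ?case by blast
qed


definition cnt :: "'a set \<Rightarrow> 'a multiset \<Rightarrow> nat" where
  "cnt A M = size (filter_mset (\<lambda>x. x \<in> A) M)"

lemma cnt2[simp]: "cnt A {#a, b#} = (if a \<in> A then 1 else 0) + (if b \<in> A then 1 else 0)"
  unfolding cnt_def by simp

lemma sum_count_cnt: "finite A \<Longrightarrow> (\<Sum>x\<in>A. count M x) = cnt A M"
proof (induction M)
  case empty then show ?case by (simp add: cnt_def)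
next
  case (add a M)
  have "(\<Sum>x\<in>A. count (add_mset a M) x) = (\<Sum>x\<in>A. count M x + (if x = a then 1 else 0))"
    by (rule sum.cong) auto
  also have "\<dots> = (\<Sum>x\<in>A. count M x) + (\<Sum>x\<in>A. (if x = a then 1 else 0))" by (rule sum.distrib)
  also have "(\<Sum>x\<in>A. (if x = a then 1 else 0)) = (if a \<in> A then 1 else (0::nat))"
    using add.prems by (simp add: sum.delta)
  finally show ?case using add by (simp add: cnt_def)
qed

lemma wfD: "wf_graph G \<Longrightarrow> finite (verts G)" "wf_graph G \<Longrightarrow> finite (edges G)"
  unfolding wf_graph_def by auto

lemma ends2: assumes "wf_graph G" "e \<in> edges G"
  shows "\<exists>a b. ends G e = {#a, b#} \<and> a \<in> verts G \<and> b \<in> verts G"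
proof -
  have s: "size (ends G e) = 2" and sub: "set_mset (ends G e) \<subseteq> verts G"
    using assms unfolding wf_graph_def by auto
  obtain a M where M: "ends G e = add_mset a M" using s by (metis size_eq_Suc_imp_eq_union numeral_2_eq_2 add_mset_add_single)
  hence "size M = 1" using s by simp
  then obtain b where "M = {#b#}" by (metis size_1_singleton_mset)
  thus ?thesis using M sub by auto
qed

lemma deg_sum: assumes "wf_graph G" "finite A"
  shows "(\<Sum>x\<in>A. deg G x) = (\<Sum>e\<in>edges G. cnt A (ends G e))"
proof -
  have "(\<Sum>x\<in>A. deg G x) = (\<Sum>x\<in>A. \<Sum>e\<in>edges G. count (ends G e) x)" unfolding deg_def ..
  also have "\<dots> = (\<Sum>e\<in>edges G. \<Sum>x\<in>A. count (ends G e) x)" by (rule sum.swap)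
  also have "\<dots> = (\<Sum>e\<in>edges G. cnt A (ends G e))" using sum_count_cnt[OF assms(2)] by simp
  finally show ?thesis .
qed

lemma sum012: "finite F \<Longrightarrow> \<forall>e\<in>F. f e \<le> (2::nat) \<Longrightarrow>
  sum f F = card {e\<in>F. f e = 1} + 2 * card {e\<in>F. f e = 2}"
proof (induction F rule: finite_induct)
  case empty then show ?case by simp
next
  case (insert x F)
  have f1: "finite {e\<in>F. f e = 1}" "finite {e\<in>F. f e = 2}" using insert by auto
  have n: "x \<notin> {e\<in>F. f e = 1}" "x \<notin> {e\<in>F. f e = 2}" using insert by auto
  have fx: "f x = 0 \<or> f x = 1 \<or> f x = 2" using insert by auto
  have IH: "sum f F = card {e\<in>F. f e = 1} + 2 * card {e\<in>F. f e = 2}" using insert by simp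
  have s: "sum f (insert x F) = f x + sum f F" using insert by simp
  show ?case
  proof -
    { assume "f x = 0"
      hence "{e\<in>insert x F. f e = 1} = {e\<in>F. f e = 1}" "{e\<in>insert x F. f e = 2} = {e\<in>F. f e = 2}" by auto
      hence ?thesis using s IH \<open>f x = 0\<close> by simp }
    moreover
    { assume h: "f x = 1"
      hence "{e\<in>insert x F. f e = 1} = insert x {e\<in>F. f e = 1}" "{e\<in>insert x F. f e = 2} = {e\<in>F. f e = 2}" by auto
      hence ?thesis using s IH h card_insert_disjoint[OF f1(1) n(1)] by simp }
    moreover
    { assume h: "f x = 2"
      hence "{e\<in>insert x F. f e = 1} = {e\<in>F. f e = 1}" "{e\<in>insert x F. f e = 2} = insert x {e\<in>F. f e = 2}" by auto
      hence ?thesis using s IH h card_insert_disjoint[OF f1(2) n(2)] by simp }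
    ultimately show ?thesis using fx by metis
  qed
qed

definition cut :: "('v, 'e) mgraph \<Rightarrow> 'v set \<Rightarrow> 'e set" where
  "cut G C = {e \<in> edges G. cnt C (ends G e) = 1}"
definition inn :: "('v, 'e) mgraph \<Rightarrow> 'v set \<Rightarrow> 'e set" where
  "inn G C = {e \<in> edges G. cnt C (ends G e) = 2}"

lemma cnt_le2: "wf_graph G \<Longrightarrow> e \<in> edges G \<Longrightarrow> cnt C (ends G e) \<le> 2"
  using ends2 by fastforce

lemma handshake_set: assumes "cubic G" "C \<subseteq> verts G"
  shows "3 * card C = card (cut G C) + 2 * card (inn G C)"
proof -
  have wf: "wf_graph G" using assms unfolding cubic_def by auto
  have fC: "finite C" using finite_subset[OF assms(2) wfD(1)[OF wf]] .
  have "(\<Sum>x\<in>C. deg G x) = (\<Sum>x\<in>C. 3)"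
    by (rule sum.cong) (use assms in \<open>auto simp: cubic_def\<close>)
  hence "(\<Sum>x\<in>C. deg G x) = 3 * card C" by simp
  moreover have "(\<Sum>x\<in>C. deg G x) = (\<Sum>e\<in>edges G. cnt C (ends G e))" using deg_sum[OF wf fC] .
  moreover have "(\<Sum>e\<in>edges G. cnt C (ends G e)) = card (cut G C) + 2 * card (inn G C)"
    unfolding cut_def inn_def by (rule sum012) (use wfD(2)[OF wf] cnt_le2[OF wf] in auto)
  ultimately show ?thesis by simp
qed

lemma adj_sym: "symp (adj G)"
  unfolding adj_def by (rule sympI) (auto simp: add_mset_commute)

lemma crossing: "(adj H)\<^sup>*\<^sup>* x y \<Longrightarrow> x \<in> C \<Longrightarrow> y \<notin> C \<Longrightarrow> \<exists>a b. adj H a b \<and> a \<in> C \<and> b \<notin> C"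
proof (induction rule: rtranclp_induct)
  case base then show ?case by simp
next
  case (step y z)
  show ?case
  proof (cases "y \<in> C")
    case True thus ?thesis using step by blast
  next
    case False thus ?thesis using step by blast
  qed
qed

lemma cut_nonempty:
  assumes wf: "wf_graph G" and con: "connected G" and C: "C \<subseteq> verts G" "x \<in> C" "y \<in> verts G" "y \<notin> C"
  shows "cut G C \<noteq> {}"
proof -
  have "reach G x y" using con C unfolding connected_def by blast
  then obtain a b where ab: "adj G a b" "a \<in> C" "b \<notin> C" using crossing C unfolding reach_def by metis
  then obtain e where e: "e \<in> edges G" "ends G e = {#a, b#}" unfolding adj_def by auto
  hence "e \<in> cut G C" unfolding cut_def using ab by simp
  thus ?thesis by blast
qed

lemma cut_not_single:
  assumes wf: "wf_graph G" and tc: "two_connected G" and C: "C \<subseteq> verts G" "x \<in> C" "y \<in> verts G" "y \<notin> C"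
  shows "cut G C \<noteq> {e}"
proof
  assume ce: "cut G C = {e}"
  hence e: "e \<in> edges G" unfolding cut_def by blast
  have con: "connected (del_edge G e)" using tc e unfolding two_connected_def by blast
  have "verts (del_edge G e) = verts G" unfolding del_edge_def by simp
  hence "reach (del_edge G e) x y" using con C unfolding connected_def by blast
  then obtain a b where ab: "adj (del_edge G e) a b" "a \<in> C" "b \<notin> C" using crossing C unfolding reach_def by metis
  then obtain f where f: "f \<in> edges G" "f \<noteq> e" "ends G f = {#a, b#}" unfolding adj_def del_edge_def by auto
  hence "f \<in> cut G C" unfolding cut_def using ab by simp
  thus False using ce f by blast
qed

lemma cut_ge2:
  assumes cub: "cubic G" and tc: "two_connected G" and C: "C \<subseteq> verts G" "C \<noteq> {}" "verts G - C \<noteq> {}"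
  shows "card (cut G C) \<ge> 2" and "odd (card C) \<Longrightarrow> card (cut G C) \<ge> 3"
proof -
  have wf: "wf_graph G" using cub unfolding cubic_def by auto
  have con: "connected G" using tc unfolding two_connected_def by auto
  obtain x where x: "x \<in> C" using C by blast
  obtain y where y: "y \<in> verts G" "y \<notin> C" using C by blast
  have fin: "finite (cut G C)" using wfD(2)[OF wf] unfolding cut_def by simp
  have ne: "cut G C \<noteq> {}" using cut_nonempty[OF wf con C(1) x y] .
  have n1: "card (cut G C) \<noteq> 1"
  proof
    assume "card (cut G C) = 1"
    then obtain e where "cut G C = {e}" by (metis card_1_singletonE)
    thus False using cut_not_single[OF wf tc C(1) x y] by blast
  qed
  have n0: "card (cut G C) \<noteq> 0" using fin ne by simp
  show "card (cut G C) \<ge> 2" using n0 n1 by linarith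
  assume o: "odd (card C)"
  have "3 * card C = card (cut G C) + 2 * card (inn G C)" using handshake_set[OF cub C(1)] .
  hence "odd (card (cut G C))" using o by presburger
  thus "card (cut G C) \<ge> 3" using n0 n1 by presburger
qed

lemma loopfree:
  assumes cub: "cubic G" and tc: "two_connected G" and e: "e \<in> edges G"
  shows "count (ends G e) x \<le> 1"
proof (rule ccontr)
  assume "\<not> count (ends G e) x \<le> 1"
  hence c2: "count (ends G e) x \<ge> 2" by simp
  have wf: "wf_graph G" using cub unfolding cubic_def by auto
  obtain a b where ab: "ends G e = {#a, b#}" "a \<in> verts G" "b \<in> verts G" using ends2[OF wf e] by blast
  have "a = x" "b = x" using c2 ab(1) by (auto split: if_splits)
  hence xv: "x \<in> verts G" and ex: "ends G e = {#x, x#}" using ab by auto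
  have "card (verts G) \<ge> 2" using tc unfolding two_connected_def by auto
  then obtain y where y: "y \<in> verts G" "y \<noteq> x"
    by (metis card_le_Suc0_iff_eq not_less_eq_eq numeral_2_eq_2 wfD(1)[OF wf] xv)
  have C: "{x} \<subseteq> verts G" "{x} \<noteq> {}" "verts G - {x} \<noteq> {}" using xv y by auto
  have "3 * card {x} = card (cut G {x}) + 2 * card (inn G {x})" using handshake_set[OF cub C(1)] .
  moreover have "e \<in> inn G {x}" unfolding inn_def using e ex by simp
  moreover have "finite (inn G {x})" unfolding inn_def using wfD(2)[OF wf] by simp
  ultimately have "card (inn G {x}) \<ge> 1" "card (cut G {x}) \<ge> 3" using cut_ge2(2)[OF cub tc C]
    by (auto simp: card_gt_0_iff Suc_le_eq)
  thus False using \<open>3 * card {x} = _\<close> by simp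
qed


lemma mset2_eq: "{#a, b#} = {#c, d#} \<longleftrightarrow> (a = c \<and> b = d) \<or> (a = d \<and> b = c)"
  by (auto simp: add_eq_conv_ex)

lemma adj_del_verts: "adj (del_verts G U) a b \<longleftrightarrow> adj G a b \<and> a \<notin> U \<and> b \<notin> U"
  unfolding adj_def del_verts_def by auto

lemma adj_verts: "wf_graph G \<Longrightarrow> adj G a b \<Longrightarrow> a \<in> verts G \<and> b \<in> verts G"
  unfolding adj_def wf_graph_def by force

lemma reach_del_iff:
  assumes wf: "wf_graph G" and x: "x \<in> verts G - U"
  shows "reach (del_verts G U) x y \<longleftrightarrow> (srel (adj G) (verts G - U))\<^sup>*\<^sup>* x y"
proof
  assume "reach (del_verts G U) x y"
  hence "(adj (del_verts G U))\<^sup>*\<^sup>* x y" unfolding reach_def .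
  thus "(srel (adj G) (verts G - U))\<^sup>*\<^sup>* x y"
  proof (induction rule: rtranclp_induct)
    case base then show ?case by simp
  next
    case (step y z)
    have "srel (adj G) (verts G - U) y z"
      using step(2) adj_verts[OF wf] unfolding adj_del_verts srel_def by blast
    thus ?case using step(3) by (metis rtranclp.rtrancl_into_rtrancl)
  qed
next
  assume "(srel (adj G) (verts G - U))\<^sup>*\<^sup>* x y"
  hence "(adj (del_verts G U))\<^sup>*\<^sup>* x y"
  proof (induction rule: rtranclp_induct)
    case base then show ?case by simp
  next
    case (step y z)
    have "adj (del_verts G U) y z" using step(2) unfolding adj_del_verts srel_def by blast
    thus ?case using step(3) by (metis rtranclp.rtrancl_into_rtrancl)
  qed
  thus "reach (del_verts G U) x y" unfolding reach_def .
qed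

lemma comp_of_del:
  assumes wf: "wf_graph G" and x: "x \<in> verts G - U"
  shows "comp_of (del_verts G U) x = cmp (adj G) (verts G - U) x"
  unfolding comp_of_def cmp_def using reach_del_iff[OF wf x] by (simp add: del_verts_def)

lemma comps_del:
  assumes wf: "wf_graph G"
  shows "comps (del_verts G U) = cmps (adj G) (verts G - U)"
proof -
  have "verts (del_verts G U) = verts G - U" by (simp add: del_verts_def)
  thus ?thesis unfolding comps_def cmps_def using comp_of_del[OF wf] by (metis (no_types, lifting) image_cong)
qed

lemma cut_cmp:
  assumes wf: "wf_graph G" and X: "X \<subseteq> verts G" and C: "C \<in> cmps (adj G) X" and e: "e \<in> cut G C"
  shows "\<exists>a b. ends G e = {#a, b#} \<and> a \<in> C \<and> b \<in> verts G - X"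
proof -
  have eE: "e \<in> edges G" and c1: "cnt C (ends G e) = 1" using e unfolding cut_def by auto
  obtain p q where pq: "ends G e = {#p, q#}" "p \<in> verts G" "q \<in> verts G" using ends2[OF wf eE] by blast
  have adjpq: "adj G p q" "adj G q p" unfolding adj_def using eE pq(1) by (auto simp: add_mset_commute)
  have CX: "C \<subseteq> X" using cmps_sub[OF C] .
  show ?thesis
  proof (cases "p \<in> C")
    case True
    hence qC: "q \<notin> C" using c1 pq(1) by (auto split: if_splits)
    have "q \<notin> X" using cmps_closed[OF adj_sym C True _ adjpq(1)] qC by blast
    thus ?thesis using True pq by blast
  next
    case False
    hence qC: "q \<in> C" using c1 pq(1) by (auto split: if_splits)
    have "p \<notin> X" using cmps_closed[OF adj_sym C qC _ adjpq(2)] False by blast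
    thus ?thesis using qC pq by (metis Diff_iff add_mset_commute)
  qed
qed

lemma cut_sum:
  assumes wf: "wf_graph G" and Y: "Y \<subseteq> verts G"
  shows "(\<Sum>C\<in>cmps (adj G) (verts G - Y). card (cut G C)) = card (cut G Y)"
proof -
  let ?X = "verts G - Y"
  have XV: "?X \<subseteq> verts G" by blast
  have fX: "finite ?X" using wfD(1)[OF wf] by simp
  have fc: "finite (cmps (adj G) ?X)" using cmps_finite[OF fX] .
  have fcut: "finite (cut G C)" for C unfolding cut_def using wfD(2)[OF wf] by simp
  have U: "cut G Y = (\<Union>C\<in>cmps (adj G) ?X. cut G C)"
  proof (rule set_eqI, rule iffI)
    fix e assume e: "e \<in> cut G Y"
    have eE: "e \<in> edges G" and c1: "cnt Y (ends G e) = 1" using e unfolding cut_def by auto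
    obtain p q where pq: "ends G e = {#p, q#}" "p \<in> verts G" "q \<in> verts G" using ends2[OF wf eE] by blast
    have "\<exists>a b. ends G e = {#a, b#} \<and> a \<in> ?X \<and> b \<in> Y"
    proof (cases "p \<in> Y")
      case True
      hence "q \<notin> Y" using c1 pq(1) by (auto split: if_splits)
      thus ?thesis using True pq by (metis Diff_iff add_mset_commute)
    next
      case False
      hence "q \<in> Y" using c1 pq(1) by (auto split: if_splits)
      thus ?thesis using False pq by blast
    qed
    then obtain a b where ab: "ends G e = {#a, b#}" "a \<in> ?X" "b \<in> Y" by blast
    have "a \<in> cmp (adj G) ?X a" using cmp_self[OF ab(2)] .
    moreover have "b \<notin> cmp (adj G) ?X a" using cmp_sub[of "adj G" ?X a] ab(3) by blast
    ultimately have "e \<in> cut G (cmp (adj G) ?X a)" unfolding cut_def using eE ab(1) by simp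
    thus "e \<in> (\<Union>C\<in>cmps (adj G) ?X. cut G C)" using cmp_in_cmps[OF ab(2)] by blast
  next
    fix e assume "e \<in> (\<Union>C\<in>cmps (adj G) ?X. cut G C)"
    then obtain C where C: "C \<in> cmps (adj G) ?X" "e \<in> cut G C" by blast
    obtain a b where ab: "ends G e = {#a, b#}" "a \<in> C" "b \<in> verts G - ?X"
      using cut_cmp[OF wf XV C] by blast
    have "a \<in> ?X" using ab(2) cmps_sub[OF C(1)] by blast
    hence "a \<notin> Y" "b \<in> Y" using ab(3) by auto
    thus "e \<in> cut G Y" using C(2) ab(1) unfolding cut_def by simp
  qed
  have dis: "\<forall>C\<in>cmps (adj G) ?X. \<forall>D\<in>cmps (adj G) ?X. C \<noteq> D \<longrightarrow> cut G C \<inter> cut G D = {}"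
  proof (intro ballI impI)
    fix C D assume C: "C \<in> cmps (adj G) ?X" and D: "D \<in> cmps (adj G) ?X" and ne: "C \<noteq> D"
    show "cut G C \<inter> cut G D = {}"
    proof (rule ccontr)
      assume "cut G C \<inter> cut G D \<noteq> {}"
      then obtain e where e: "e \<in> cut G C" "e \<in> cut G D" by blast
      obtain a b where ab: "ends G e = {#a, b#}" "a \<in> C" "b \<in> verts G - ?X"
        using cut_cmp[OF wf XV C e(1)] by blast
      obtain a' b' where ab': "ends G e = {#a', b'#}" "a' \<in> D" "b' \<in> verts G - ?X"
        using cut_cmp[OF wf XV D e(2)] by blast
      have "a \<in> ?X" "a' \<in> ?X" using ab(2) ab'(2) cmps_sub[OF C] cmps_sub[OF D] by auto
      hence "a = a'" using ab(1) ab'(1) ab(3) ab'(3) by (auto simp: mset2_eq)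
      thus False using cmps_disj[OF adj_sym C D ne] ab(2) ab'(2) by blast
    qed
  qed
  have "card (cut G Y) = (\<Sum>C\<in>cmps (adj G) ?X. card (cut G C))"
    unfolding U by (rule card_UN_disjoint[OF fc]) (use fcut dis in auto)
  thus ?thesis by simp
qed

definition pk :: "('v, 'e) mgraph \<Rightarrow> 'v \<Rightarrow> 'v \<Rightarrow> 'e" where
  "pk G a b = (SOME f. f \<in> edges G \<and> ends G f = {#a, b#})"

lemma pk: "adj G a b \<Longrightarrow> pk G a b \<in> edges G \<and> ends G (pk G a b) = {#a, b#}"
  unfolding pk_def adj_def by (rule someI_ex) auto

lemma pk_sym: "pk G a b = pk G b a"
  unfolding pk_def by (simp add: add_mset_commute)

definition pmE :: "('v, 'e) mgraph \<Rightarrow> 'v set \<Rightarrow> ('v \<Rightarrow> 'v) \<Rightarrow> 'e set" where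
  "pmE G W m = (\<lambda>x. pk G x (m x)) ` W"

lemma pmE_sub: "pmatch (adj G) W m \<Longrightarrow> pmE G W m \<subseteq> edges G"
  unfolding pmE_def pmatch_def using pk by fastforce

lemma pmE_ends: "pmatch (adj G) W m \<Longrightarrow> f \<in> pmE G W m \<Longrightarrow>
   \<exists>a. a \<in> W \<and> m a \<in> W \<and> m a \<noteq> a \<and> ends G f = {#a, m a#}"
  unfolding pmE_def pmatch_def using pk by fastforce

lemma pmE_at:
  assumes pm: "pmatch (adj G) W m" and z: "z \<in> W"
  shows "{f \<in> pmE G W m. z \<in># ends G f} = {pk G z (m z)}"
proof
  have "pk G z (m z) \<in> pmE G W m" unfolding pmE_def using z by blast
  moreover have "z \<in># ends G (pk G z (m z))" using pk[of G z "m z"] pm z unfolding pmatch_def by auto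
  ultimately show "{pk G z (m z)} \<subseteq> {f \<in> pmE G W m. z \<in># ends G f}" by blast
next
  show "{f \<in> pmE G W m. z \<in># ends G f} \<subseteq> {pk G z (m z)}"
  proof
    fix f assume f: "f \<in> {f \<in> pmE G W m. z \<in># ends G f}"
    then obtain x where x: "x \<in> W" "f = pk G x (m x)" unfolding pmE_def by blast
    have px: "m x \<in> W" "m (m x) = x" "adj G x (m x)" using pm x(1) unfolding pmatch_def by auto
    have "ends G f = {#x, m x#}" using pk[OF px(3)] x(2) by simp
    hence "z = x \<or> z = m x" using f by auto
    thus "f \<in> {pk G z (m z)}"
    proof
      assume "z = x" thus ?thesis using x by simp
    next
      assume "z = m x"
      hence "m z = x" using px by simp
      have "f = pk G (m z) z" using x(2) \<open>m z = x\<close> \<open>z = m x\<close> by simp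
      thus ?thesis using pk_sym[of G "m z" z] by simp
    qed
  qed
qed


lemma count2: "count {#a, b#} z = (if z = a then 1 else 0) + (if z = b then 1 else 0)"
  by simp

lemma other_eq: "ends G e = {#x, y#} \<Longrightarrow> other G x e = y"
  unfolding other_def by (rule the_equality) (auto simp: mset2_eq)

lemma at_props:
  assumes cub: "cubic G" and tc: "two_connected G" and e: "e \<in> at G x"
  shows "ends G e = {#x, other G x e#}" "other G x e \<noteq> x" "other G x e \<in> verts G" "e \<in> edges G"
proof -
  have wf: "wf_graph G" using cub unfolding cubic_def by auto
  have eE: "e \<in> edges G" and xe: "x \<in># ends G e" using e unfolding at_def by auto
  obtain a b where ab: "ends G e = {#a, b#}" "a \<in> verts G" "b \<in> verts G" using ends2[OF wf eE] by blast
  obtain y where y: "ends G e = {#x, y#}" "y \<in> verts G"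
  proof (cases "x = a")
    case True thus ?thesis using that ab by blast
  next
    case False
    hence "x = b" using xe ab(1) by auto
    thus ?thesis using that ab by (metis add_mset_commute)
  qed
  have "y \<noteq> x" using loopfree[OF cub tc eE, of x] y(1) by auto
  moreover have "other G x e = y" using other_eq[OF y(1)] .
  ultimately show "ends G e = {#x, other G x e#}" "other G x e \<noteq> x" "other G x e \<in> verts G" "e \<in> edges G"
    using y eE by auto
qed

lemma card_at:
  assumes cub: "cubic G" and tc: "two_connected G" and x: "x \<in> verts G"
  shows "card (at G x) = 3"
proof -
  have wf: "wf_graph G" using cub unfolding cubic_def by auto
  have fE: "finite (edges G)" using wfD(2)[OF wf] .
  have "deg G x = (\<Sum>e\<in>edges G. count (ends G e) x)" unfolding deg_def ..
  also have "\<dots> = (\<Sum>e\<in>edges G. if e \<in> at G x then 1 else 0)"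
  proof (rule sum.cong)
    fix e assume e: "e \<in> edges G"
    show "count (ends G e) x = (if e \<in> at G x then 1 else 0)"
    proof (cases "x \<in># ends G e")
      case True
      hence "count (ends G e) x \<ge> 1" by (simp add: Suc_le_eq)
      hence c: "count (ends G e) x = 1" using loopfree[OF cub tc e, of x] by linarith
      have "e \<in> at G x" using e True unfolding at_def by simp
      thus ?thesis using c by simp
    next
      case False
      thus ?thesis unfolding at_def by (simp add: not_in_iff)
    qed
  qed simp
  also have "\<dots> = card {e \<in> edges G. e \<in> at G x}"
    using sum.inter_filter[OF fE, of "\<lambda>_. 1::nat" "\<lambda>e. e \<in> at G x"] by simp
  also have "{e \<in> edges G. e \<in> at G x} = at G x" unfolding at_def by auto
  finally show ?thesis using cub x unfolding cubic_def by simp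
qed

lemma ev32: "3 * a = 2 * (b::nat) \<Longrightarrow> even a" by presburger

lemma even_verts: assumes cub: "cubic G" shows "even (card (verts G))"
proof -
  have wf: "wf_graph G" using cub unfolding cubic_def by auto
  have "cut G (verts G) = {}"
  proof -
    { fix e assume e: "e \<in> edges G"
      obtain a b where ab: "ends G e = {#a, b#}" "a \<in> verts G" "b \<in> verts G" using ends2[OF wf e] by blast
      hence "cnt (verts G) (ends G e) = 2" by simp }
    thus ?thesis unfolding cut_def by force
  qed
  hence "3 * card (verts G) = 2 * card (inn G (verts G))" using handshake_set[OF cub order_refl] by simp
  thus ?thesis using ev32 by blast
qed

lemma tutte_count: "3 * a \<le> 3 * s + (4::nat) \<Longrightarrow> even a = even s \<Longrightarrow> a \<le> s"
  by presburger

lemma petersen_edge: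
  assumes cub: "cubic G" and tc: "two_connected G" and e: "e \<in> edges G"
    and exy: "ends G e = {#x, y#}" and xy: "x \<noteq> y"
  shows "\<exists>M. perfect_matching G M \<and> e \<in> M"
proof -
  have wf: "wf_graph G" using cub unfolding cubic_def by auto
  have xyV: "x \<in> verts G" "y \<in> verts G" using e exy wf unfolding wf_graph_def by auto
  define W where "W = verts G - {x, y}"
  have fV: "finite (verts G)" using wfD(1)[OF wf] .
  have tcond: "\<forall>S\<subseteq>W. oddc (adj G) (W - S) \<le> card S"
  proof (intro allI impI)
    fix S assume S: "S \<subseteq> W"
    define Y where "Y = S \<union> {x, y}"
    have YV: "Y \<subseteq> verts G" using S xyV unfolding Y_def W_def by blast
    have WS: "W - S = verts G - Y" unfolding W_def Y_def by blast
    have fS: "finite S" using finite_subset[OF S] fV W_def by simp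
    have cY: "card Y = card S + 2" unfolding Y_def using S xy fS unfolding W_def
      by (subst card_Un_disjoint) auto
    have h: "3 * card Y = card (cut G Y) + 2 * card (inn G Y)" using handshake_set[OF cub YV] .
    have "e \<in> inn G Y" unfolding inn_def Y_def using e exy by simp
    moreover have "finite (inn G Y)" unfolding inn_def using wfD(2)[OF wf] by simp
    ultimately have "card (inn G Y) \<ge> 1" by (metis One_nat_def Suc_leI card_gt_0_iff empty_iff)
    hence cutY: "card (cut G Y) \<le> 3 * card S + 4" using h cY by simp
    let ?cs = "cmps (adj G) (verts G - Y)"
    have fcs: "finite ?cs" using fV by (intro cmps_finite) simp
    have "3 * oddc (adj G) (verts G - Y) = (\<Sum>C\<in>{C\<in>?cs. odd (card C)}. 3)"
      unfolding oddc_def by simp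
    also have "\<dots> \<le> (\<Sum>C\<in>{C\<in>?cs. odd (card C)}. card (cut G C))"
    proof (rule sum_mono)
      fix C assume C: "C \<in> {C\<in>?cs. odd (card C)}"
      have CV: "C \<subseteq> verts G" using cmps_sub[of C "adj G" "verts G - Y"] C by blast
      have "C \<noteq> {}" using cmps_ne C by blast
      moreover have "x \<in> verts G - C" using xyV CV cmps_sub[of C "adj G" "verts G - Y"] C Y_def by blast
      ultimately show "3 \<le> card (cut G C)" using cut_ge2(2)[OF cub tc CV] C by blast
    qed
    also have "\<dots> \<le> (\<Sum>C\<in>?cs. card (cut G C))" by (rule sum_mono2[OF fcs]) auto
    also have "\<dots> = card (cut G Y)" using cut_sum[OF wf YV] .
    finally have t1: "3 * oddc (adj G) (verts G - Y) \<le> 3 * card S + 4" using cutY by simp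
    have "even (oddc (adj G) (verts G - Y)) = even (card (verts G - Y))"
      using oddc_parity[OF adj_sym finite_Diff[OF fV]] .
    moreover have "card (verts G - Y) = card (verts G) - card Y" using card_Diff_subset[OF _ YV] fV YV finite_subset by metis
    moreover have "card Y \<le> card (verts G)" using card_mono[OF fV YV] .
    ultimately have "even (oddc (adj G) (verts G - Y)) = even (card S)"
      using even_verts[OF cub] cY by (simp add: even_diff_nat)
    thus "oddc (adj G) (W - S) \<le> card S" using tutte_count[OF t1] WS by simp
  qed
  have fW: "finite W" using fV W_def by simp
  obtain m where pm: "pmatch (adj G) W m" using tutte[OF adj_sym fW tcond] by blast
  define M where "M = insert e (pmE G W m)"
  have "perfect_matching G M" unfolding perfect_matching_def
  proof (intro conjI ballI allI)
    show "M \<subseteq> edges G" unfolding M_def using pmE_sub[OF pm] e by blast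
  next
    fix f z assume f: "f \<in> M"
    show "count (ends G f) z \<le> 1"
    proof (cases "f = e")
      case True thus ?thesis using exy xy by auto
    next
      case False
      hence "f \<in> pmE G W m" using f M_def by blast
      then obtain a where "m a \<noteq> a" "ends G f = {#a, m a#}" using pmE_ends[OF pm] by blast
      thus ?thesis by auto
    qed
  next
    fix z assume z: "z \<in> verts G"
    have pmW: "\<forall>f\<in>pmE G W m. \<forall>w. w \<in># ends G f \<longrightarrow> w \<in> W"
    proof (intro ballI allI impI)
      fix f w assume "f \<in> pmE G W m" "w \<in># ends G f"
      then obtain a where "a \<in> W" "m a \<in> W" "ends G f = {#a, m a#}" "w \<in># ends G f" using pmE_ends[OF pm] by blast
      thus "w \<in> W" by auto
    qed
    show "card {f \<in> M. z \<in># ends G f} = 1"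
    proof (cases "z \<in> W")
      case True
      have "z \<notin># ends G e" using True exy unfolding W_def by auto
      hence "{f \<in> M. z \<in># ends G f} = {f \<in> pmE G W m. z \<in># ends G f}" unfolding M_def by auto
      thus ?thesis using pmE_at[OF pm True] by simp
    next
      case False
      hence "{f \<in> M. z \<in># ends G f} = {e}" using pmW z exy unfolding M_def W_def by auto
      thus ?thesis by simp
    qed
  qed
  thus ?thesis unfolding M_def by blast
qed

lemma pm_cover:
  assumes cub: "cubic G" and tc: "two_connected G"
  shows "\<exists>Ms. (\<forall>M\<in>set Ms. perfect_matching G M) \<and> \<Union>(set Ms) = edges G"
proof -
  have wf: "wf_graph G" using cub unfolding cubic_def by auto
  have ex: "\<exists>M. perfect_matching G M \<and> e \<in> M" if e: "e \<in> edges G" for e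
  proof -
    obtain a b where ab: "ends G e = {#a, b#}" using ends2[OF wf e] by blast
    have "a \<noteq> b" using loopfree[OF cub tc e, of a] ab by auto
    thus ?thesis using petersen_edge[OF cub tc e ab] by blast
  qed
  obtain es where es: "set es = edges G" using finite_list[OF wfD(2)[OF wf]] by blast
  define Ms where "Ms = map (\<lambda>e. SOME M. perfect_matching G M \<and> e \<in> M) es"
  have sp: "perfect_matching G (SOME M. perfect_matching G M \<and> e \<in> M) \<and> e \<in> (SOME M. perfect_matching G M \<and> e \<in> M)"
    if "e \<in> edges G" for e using someI_ex[OF ex[OF that]] .
  have "\<forall>M\<in>set Ms. perfect_matching G M" unfolding Ms_def using sp es by auto
  moreover have "\<Union>(set Ms) = edges G"
  proof
    show "\<Union>(set Ms) \<subseteq> edges G" using \<open>\<forall>M\<in>set Ms. perfect_matching G M\<close> unfolding perfect_matching_def by blast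
    show "edges G \<subseteq> \<Union>(set Ms)" unfolding Ms_def using sp es by fastforce
  qed
  ultimately show ?thesis by blast
qed


lemma card1_set: "card A = 1 \<longleftrightarrow> (\<exists>a. A = {a})"
  using card_1_singleton_iff[of A] by simp

locale HS =
  fixes H :: "('v, 'e) mgraph" and u :: 'v
  assumes cubH: "cubic H" and tcH: "two_connected H" and uV: "u \<in> verts H"
begin

abbreviation "Au \<equiv> at H u"
abbreviation "Hu \<equiv> inflate H u"

definition T :: "'e set set" where
  "T = {{e1, e2} | e1 e2. e1 \<in> Au \<and> e2 \<in> Au \<and> e1 \<noteq> e2}"

lemma wfH: "wf_graph H" using cubH unfolding cubic_def by auto

lemma Au: assumes "e \<in> Au"
  shows "ends H e = {#u, other H u e#}" "other H u e \<noteq> u" "other H u e \<in> verts H" "e \<in> edges H"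
  using at_props[OF cubH tcH assms] by auto

lemma cardAu: "card Au = 3" using card_at[OF cubH tcH uV] .
lemma finAu: "finite Au" using cardAu by (metis card.infinite zero_neq_numeral)

lemma notAu: "e \<in> edges H \<Longrightarrow> e \<notin> Au \<Longrightarrow> u \<notin># ends H e"
  unfolding at_def by auto

lemma vHu: "verts Hu = Inl ` (verts H - {u}) \<union> Inr ` Au" unfolding inflate_def by simp
lemma eHu: "edges Hu = Inl ` edges H \<union> Inr ` T" unfolding inflate_def T_def by simp

lemma ends_at: "e \<in> Au \<Longrightarrow> ends Hu (Inl e) = {#Inl (other H u e), Inr e#}"
  unfolding inflate_def at_def by simp

lemma ends_nat: "e \<notin> Au \<Longrightarrow> e \<in> edges H \<Longrightarrow> ends Hu (Inl e) = image_mset Inl (ends H e)"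
  unfolding inflate_def at_def by simp

lemma ends_nat2: assumes "e \<notin> Au" "e \<in> edges H"
  shows "\<exists>a b. ends H e = {#a, b#} \<and> ends Hu (Inl e) = {#Inl a, Inl b#} \<and> a \<noteq> b \<and>
     a \<in> verts H - {u} \<and> b \<in> verts H - {u}"
proof -
  obtain a b where ab: "ends H e = {#a, b#}" "a \<in> verts H" "b \<in> verts H" using ends2[OF wfH assms(2)] by blast
  have "a \<noteq> b" using loopfree[OF cubH tcH assms(2), of a] ab by auto
  moreover have "a \<noteq> u" "b \<noteq> u" using notAu[OF assms(2,1)] ab by auto
  ultimately show ?thesis using ab ends_nat[OF assms] by auto
qed

lemma T_el: "s \<in> T \<Longrightarrow> \<exists>e1 e2. s = {e1, e2} \<and> e1 \<in> Au \<and> e2 \<in> Au \<and> e1 \<noteq> e2"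
  unfolding T_def by blast

lemma ends_T: assumes "s \<in> T"
  shows "\<exists>e1 e2. s = {e1, e2} \<and> e1 \<in> Au \<and> e2 \<in> Au \<and> e1 \<noteq> e2 \<and> ends Hu (Inr s) = {#Inr e1, Inr e2#}"
proof -
  obtain e1 e2 where e: "s = {e1, e2}" "e1 \<in> Au" "e2 \<in> Au" "e1 \<noteq> e2" using T_el[OF assms] by blast
  have "ends Hu (Inr s) = image_mset Inr (mset_set s)" unfolding inflate_def by simp
  also have "mset_set s = {#e1, e2#}" using e by simp
  finally show ?thesis using e by auto
qed

lemma Hu_ends2: assumes "d \<in> edges Hu"
  shows "\<exists>p q. ends Hu d = {#p, q#} \<and> p \<noteq> q \<and> p \<in> verts Hu \<and> q \<in> verts Hu"
proof -
  { fix e assume e: "e \<in> edges H" "d = Inl e"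
    have ?thesis
    proof (cases "e \<in> Au")
      case True
      thus ?thesis using ends_at[OF True] Au[OF True] e unfolding vHu by auto
    next
      case False
      thus ?thesis using ends_nat2[OF False e(1)] e unfolding vHu by auto
    qed }
  moreover
  { fix s assume s: "s \<in> T" "d = Inr s"
    have ?thesis using ends_T[OF s(1)] s unfolding vHu by auto }
  ultimately show ?thesis using assms unfolding eHu by blast
qed

lemma I1: assumes "x \<noteq> u" "e \<in> edges H"
  shows "Inl x \<in># ends Hu (Inl e) \<longleftrightarrow> x \<in># ends H e"
proof (cases "e \<in> Au")
  case True thus ?thesis using ends_at[OF True] Au[OF True] assms by auto
next
  case False
  obtain a b where "ends H e = {#a, b#}" "ends Hu (Inl e) = {#Inl a, Inl b#}" using ends_nat2[OF False assms(2)] by blast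
  thus ?thesis by auto
qed

lemma I2: "Inl x \<notin># ends Hu (Inr s)" unfolding inflate_def by auto

lemma I3: assumes "a \<in> Au" "e \<in> edges H"
  shows "Inr a \<in># ends Hu (Inl e) \<longleftrightarrow> e = a"
proof (cases "e \<in> Au")
  case True thus ?thesis using ends_at[OF True] by auto
next
  case False
  obtain p q where "ends Hu (Inl e) = {#Inl p, Inl q#}" using ends_nat2[OF False assms(2)] by blast
  thus ?thesis using False assms(1) by auto
qed

lemma I4: assumes "s \<in> T" shows "Inr a \<in># ends Hu (Inr s) \<longleftrightarrow> a \<in> s"
  using ends_T[OF assms] by auto

lemma pm_one: assumes "perfect_matching X M" "z \<in> verts X"
  shows "\<exists>d. {d' \<in> M. z \<in># ends X d'} = {d}"
  using assms unfolding perfect_matching_def by (simp add: card_1_singleton_iff)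

lemma T_compl: assumes "s \<in> T" shows "\<exists>j. j \<in> Au \<and> j \<notin> s \<and> Au - s = {j} \<and> s = Au - {j}"
proof -
  obtain e1 e2 where e: "s = {e1, e2}" "e1 \<in> Au" "e2 \<in> Au" "e1 \<noteq> e2" using T_el[OF assms] by blast
  have "card (Au - s) = 1" using cardAu e finAu by (simp add: card_Diff_subset)
  then obtain j where j: "Au - s = {j}" by (auto simp: card_1_singleton_iff)
  have "s = Au - {j}" using j e by blast
  thus ?thesis using j by blast
qed

definition r :: "('e + 'e set) set \<Rightarrow> 'e set" where "r M = {e. Inl e \<in> M}"
definition t :: "('e + 'e set) set \<Rightarrow> 'e set" where "t M = {e \<in> Au. Inl e \<in> M}"

lemma tri:
  assumes pm: "perfect_matching Hu M" and s: "s \<in> T" and sM: "Inr s \<in> M"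
  shows "t M = Au - s"
proof -
  obtain e1 e2 where e: "s = {e1, e2}" "e1 \<in> Au" "e2 \<in> Au" "e1 \<noteq> e2" using T_el[OF s] by blast
  have sub: "M \<subseteq> edges Hu" using pm unfolding perfect_matching_def by auto
  have uniq: "d = d'" if h: "d \<in> M" "d' \<in> M" "z \<in># ends Hu d" "z \<in># ends Hu d'" "z \<in> verts Hu" for d d' z
  proof -
    obtain d0 where d0: "{d' \<in> M. z \<in># ends Hu d'} = {d0}" using pm_one[OF pm h(5)] by blast
    have "d \<in> {d' \<in> M. z \<in># ends Hu d'}" "d' \<in> {d' \<in> M. z \<in># ends Hu d'}" using h by auto
    thus ?thesis unfolding d0 by simp
  qed
  have A1: "Inl c \<notin> M" if c: "c \<in> s" for c
  proof
    assume "Inl c \<in> M"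
    moreover have "c \<in> Au" using c e by blast
    moreover have "Inr c \<in># ends Hu (Inl c)" using ends_at[OF \<open>c \<in> Au\<close>] by simp
    moreover have "Inr c \<in># ends Hu (Inr s)" using I4[OF s] c by simp
    moreover have "Inr c \<in> verts Hu" using \<open>c \<in> Au\<close> unfolding vHu by blast
    ultimately show False using uniq[OF _ sM] by blast
  qed
  obtain j where j: "j \<in> Au" "j \<notin> s" "Au - s = {j}" using T_compl[OF s] by blast
  have A2: "Inl j \<in> M"
  proof -
    have jv: "Inr j \<in> verts Hu" using j unfolding vHu by blast
    obtain d where d: "{d' \<in> M. Inr j \<in># ends Hu d'} = {d}" using pm_one[OF pm jv] by blast
    hence dM: "d \<in> M" "Inr j \<in># ends Hu d" by auto
    have "d \<in> edges Hu" using dM sub by blast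
    then consider (l) e where "e \<in> edges H" "d = Inl e" | (rr) s' where "s' \<in> T" "d = Inr s'" unfolding eHu by blast
    thus ?thesis
    proof cases
      case l thus ?thesis using I3[OF j(1) l(1)] dM by simp
    next
      case rr
      hence js: "j \<in> s'" using I4[OF rr(1)] dM by simp
      obtain f1 f2 where f: "s' = {f1, f2}" "f1 \<in> Au" "f2 \<in> Au" "f1 \<noteq> f2" using T_el[OF rr(1)] by blast
      obtain w where w: "w \<in> s'" "w \<noteq> j" using f by blast
      have "w \<in> Au" using w f by blast
      hence ws: "w \<in> s" using j w by blast
      have "Inr w \<in># ends Hu (Inr s')" using I4[OF rr(1)] w by simp
      moreover have "Inr w \<in># ends Hu (Inr s)" using I4[OF s] ws by simp
      moreover have "Inr w \<in> verts Hu" using \<open>w \<in> Au\<close> unfolding vHu by blast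
      ultimately have "Inr s' = Inr s" using uniq[OF _ sM] dM rr(2) by blast
      hence "s' = s" by simp
      thus ?thesis using js j by blast
    qed
  qed
  show ?thesis
  proof
    show "t M \<subseteq> Au - s" unfolding t_def using A1 by blast
    show "Au - s \<subseteq> t M" unfolding t_def j(3) using A2 j(1) by simp
  qed
qed

lemma types:
  assumes pm: "perfect_matching Hu M"
  shows "t M = Au \<or> (\<exists>j. j \<in> Au \<and> t M = {j} \<and> Inr (Au - {j}) \<in> M)"
proof (cases "t M = Au")
  case False
  then obtain a where a: "a \<in> Au" "Inl a \<notin> M" unfolding t_def by blast
  have av: "Inr a \<in> verts Hu" using a unfolding vHu by blast
  obtain d where d: "{d' \<in> M. Inr a \<in># ends Hu d'} = {d}" using pm_one[OF pm av] by blast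
  hence dM: "d \<in> M" "Inr a \<in># ends Hu d" by auto
  have "d \<in> edges Hu" using dM pm unfolding perfect_matching_def by blast
  then consider (l) e where "e \<in> edges H" "d = Inl e" | (rr) s where "s \<in> T" "d = Inr s" unfolding eHu by blast
  thus ?thesis
  proof cases
    case l thus ?thesis using I3[OF a(1) l(1)] dM a by simp
  next
    case rr
    obtain j where j: "j \<in> Au" "j \<notin> s" "Au - s = {j}" "s = Au - {j}" using T_compl[OF rr(1)] by blast
    have "t M = {j}" using tri[OF pm rr(1)] dM rr j by simp
    thus ?thesis using j dM rr by auto
  qed
qed simp

lemma restr_at:
  assumes pm: "perfect_matching Hu M" and x: "x \<noteq> u"
  shows "{d \<in> M. Inl x \<in># ends Hu d} = Inl ` {e \<in> r M. x \<in># ends H e}"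
proof -
  have sub: "M \<subseteq> edges Hu" using pm unfolding perfect_matching_def by auto
  show ?thesis
  proof
    show "{d \<in> M. Inl x \<in># ends Hu d} \<subseteq> Inl ` {e \<in> r M. x \<in># ends H e}"
    proof
      fix d assume d: "d \<in> {d \<in> M. Inl x \<in># ends Hu d}"
      hence "d \<in> edges Hu" using sub by blast
      then consider (l) e where "e \<in> edges H" "d = Inl e" | (rr) s where "s \<in> T" "d = Inr s" unfolding eHu by blast
      thus "d \<in> Inl ` {e \<in> r M. x \<in># ends H e}"
      proof cases
        case l thus ?thesis using d I1[OF x l(1)] unfolding r_def by auto
      next
        case rr thus ?thesis using d I2 by auto
      qed
    qed
    show "Inl ` {e \<in> r M. x \<in># ends H e} \<subseteq> {d \<in> M. Inl x \<in># ends Hu d}"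
    proof
      fix d :: "'e + 'e set" assume "d \<in> Inl ` {e \<in> r M. x \<in># ends H e}"
      then obtain e where e: "d = Inl e" "Inl e \<in> M" "x \<in># ends H e" unfolding r_def by blast
      have "Inl e \<in> edges Hu" using e sub by blast
      hence "e \<in> edges H" unfolding eHu by auto
      thus "d \<in> {d \<in> M. Inl x \<in># ends Hu d}" using e I1[OF x] by auto
    qed
  qed
qed

lemma r_sub: "perfect_matching Hu M \<Longrightarrow> r M \<subseteq> edges H"
  unfolding r_def perfect_matching_def eHu by auto

lemma restr_pm:
  assumes pm: "perfect_matching Hu M" and tj: "t M = {j}"
  shows "perfect_matching H (r M)"
  unfolding perfect_matching_def
proof (intro conjI ballI allI)
  show "r M \<subseteq> edges H" using r_sub[OF pm] .
next
  fix e z assume "e \<in> r M"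
  hence "e \<in> edges H" using r_sub[OF pm] by blast
  thus "count (ends H e) z \<le> 1" using loopfree[OF cubH tcH] by blast
next
  fix z assume z: "z \<in> verts H"
  show "card {e \<in> r M. z \<in># ends H e} = 1"
  proof (cases "z = u")
    case True
    have "{e \<in> r M. z \<in># ends H e} = t M" unfolding t_def at_def r_def using r_sub[OF pm] True
      unfolding r_def by auto
    thus ?thesis using tj by simp
  next
    case False
    have zv: "Inl z \<in> verts Hu" using z False unfolding vHu by blast
    have "card {d \<in> M. Inl z \<in># ends Hu d} = 1" using pm zv unfolding perfect_matching_def by blast
    thus ?thesis using restr_at[OF pm False] by (simp add: card_image)
  qed
qed

lemma pm_Au: assumes "perfect_matching H M" shows "\<exists>j. M \<inter> Au = {j}"
proof -
  have "card {e \<in> M. u \<in># ends H e} = 1" using assms uV unfolding perfect_matching_def by blast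
  moreover have "{e \<in> M. u \<in># ends H e} = M \<inter> Au" using assms unfolding perfect_matching_def at_def by auto
  ultimately show ?thesis by (simp add: card_1_singleton_iff)
qed

lemma lift_pm:
  assumes pm: "perfect_matching H M" and j: "M \<inter> Au = {j}"
  shows "perfect_matching Hu (Inl ` M \<union> {Inr (Au - {j})})"
proof -
  let ?L = "Inl ` M \<union> {Inr (Au - {j})}"
  have jA: "j \<in> Au" using j by blast
  have MH: "M \<subseteq> edges H" using pm unfolding perfect_matching_def by auto
  obtain k l where kl: "Au - {j} = {k, l}" "k \<noteq> l" "k \<in> Au" "l \<in> Au"
  proof -
    have "card (Au - {j}) = 2" using cardAu jA finAu by simp
    thus ?thesis using that by (auto simp: card_2_iff)
  qed
  have sT: "Au - {j} \<in> T" unfolding T_def using kl by blast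
  show ?thesis unfolding perfect_matching_def
  proof (intro conjI ballI allI)
    show "?L \<subseteq> edges Hu" using MH sT unfolding eHu by blast
  next
    fix d z assume d: "d \<in> ?L"
    hence "d \<in> edges Hu" using MH sT unfolding eHu by blast
    then obtain p q where "ends Hu d = {#p, q#}" "p \<noteq> q" using Hu_ends2 by blast
    thus "count (ends Hu d) z \<le> 1" by auto
  next
    fix z assume z: "z \<in> verts Hu"
    then consider (l) x where "x \<in> verts H - {u}" "z = Inl x" | (rr) a where "a \<in> Au" "z = Inr a" unfolding vHu by blast
    thus "card {d \<in> ?L. z \<in># ends Hu d} = 1"
    proof cases
      case l
      have "{d \<in> ?L. z \<in># ends Hu d} = Inl ` {e \<in> M. x \<in># ends H e}"
        using l I1 I2 MH by auto
      moreover have "card {e \<in> M. x \<in># ends H e} = 1" using pm l unfolding perfect_matching_def by blast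
      ultimately show ?thesis by (simp add: card_image)
    next
      case rr
      show ?thesis
      proof (cases "a = j")
        case True
        have "{d \<in> ?L. z \<in># ends Hu d} = {Inl j}"
          using rr True I3[OF rr(1)] I4[OF sT] MH j by auto
        thus ?thesis by simp
      next
        case False
        have "a \<notin> M" using j rr False by blast
        hence "{d \<in> ?L. z \<in># ends Hu d} = {Inr (Au - {j})}"
          using rr False I3[OF rr(1)] I4[OF sT] MH by auto
        thus ?thesis by simp
      qed
    qed
  qed
qed

lemma Hu_cover: "\<exists>Ms. (\<forall>M\<in>set Ms. perfect_matching Hu M) \<and> \<Union>(set Ms) = edges Hu"
proof -
  obtain Ms where Ms: "\<forall>M\<in>set Ms. perfect_matching H M" "\<Union>(set Ms) = edges H" using pm_cover[OF cubH tcH] by blast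
  define J where "J M = (THE j. M \<inter> Au = {j})" for M
  have J: "M \<inter> Au = {J M}" if "M \<in> set Ms" for M
    unfolding J_def using pm_Au[OF Ms(1)[rule_format, OF that]] by (metis (mono_tags, lifting) the_equality singleton_inject)
  define L where "L M = Inl ` M \<union> {Inr (Au - {J M})}" for M
  have pL: "perfect_matching Hu (L M)" if "M \<in> set Ms" for M
    unfolding L_def using lift_pm[OF Ms(1)[rule_format, OF that] J[OF that]] .
  have "\<Union>(set (map L Ms)) = edges Hu"
  proof
    show "\<Union>(set (map L Ms)) \<subseteq> edges Hu"
    proof
      fix d assume "d \<in> \<Union>(set (map L Ms))"
      then obtain M where M: "M \<in> set Ms" "d \<in> L M" by auto
      thus "d \<in> edges Hu" using pL[OF M(1)] unfolding perfect_matching_def by blast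
    qed
  next
    show "edges Hu \<subseteq> \<Union>(set (map L Ms))"
    proof
      fix d assume "d \<in> edges Hu"
      then consider (l) e where "e \<in> edges H" "d = Inl e" | (rr) s where "s \<in> T" "d = Inr s" unfolding eHu by blast
      thus "d \<in> \<Union>(set (map L Ms))"
      proof cases
        case l
        then obtain M where "M \<in> set Ms" "e \<in> M" using Ms(2) by blast
        thus ?thesis using l unfolding L_def by auto
      next
        case rr
        obtain j where j: "j \<in> Au" "Au - s = {j}" "s = Au - {j}" using T_compl[OF rr(1)] by blast
        have "j \<in> edges H" using Au(4)[OF j(1)] .
        then obtain M where M: "M \<in> set Ms" "j \<in> M" using Ms(2) by blast
        have "j \<in> M \<inter> Au" using M(2) j(1) by simp
        hence "J M = j" unfolding J[OF M(1)] by simp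
        thus ?thesis using M rr j unfolding L_def by auto
      qed
    qed
  qed
  moreover have "\<forall>M\<in>set (map L Ms). perfect_matching Hu M" using pL by auto
  ultimately show ?thesis by blast
qed

end


lemma colour_uniq:
  assumes prp: "\<forall>e\<in>edges K. \<forall>e'\<in>edges K. e \<noteq> e' \<and> (\<exists>x. x \<in># ends K e \<and> x \<in># ends K e') \<longrightarrow> c e \<noteq> c e'"
  shows "f \<in> at K y \<Longrightarrow> f' \<in> at K y \<Longrightarrow> c f = c f' \<Longrightarrow> f = f'"
  using prp unfolding at_def by blast

lemma colour_at:
  assumes cub: "cubic K" and tc: "two_connected K" and col: "\<forall>e\<in>edges K. c e < (3::nat)"
    and prp: "\<forall>e\<in>edges K. \<forall>e'\<in>edges K. e \<noteq> e' \<and> (\<exists>x. x \<in># ends K e \<and> x \<in># ends K e') \<longrightarrow> c e \<noteq> c e'"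
    and y: "y \<in> verts K" and g: "\<gamma> < 3"
  shows "\<exists>f. f \<in> at K y \<and> c f = \<gamma>" "f \<in> at K y \<Longrightarrow> f' \<in> at K y \<Longrightarrow> c f = c f' \<Longrightarrow> f = f'"
proof -
  have inj: "inj_on c (at K y)"
  proof (rule inj_onI)
    fix f f' assume "f \<in> at K y" "f' \<in> at K y" "c f = c f'"
    thus "f = f'" using prp unfolding at_def by blast
  qed
  thus "f \<in> at K y \<Longrightarrow> f' \<in> at K y \<Longrightarrow> c f = c f' \<Longrightarrow> f = f'" by (meson inj_onD)
  have "card (c ` at K y) = 3" using card_image[OF inj] card_at[OF cub tc y] by simp
  moreover have "c ` at K y \<subseteq> {..<3}" using col unfolding at_def by auto
  ultimately have "c ` at K y = {..<3}" by (metis card_lessThan card_subset_eq finite_lessThan)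
  thus "\<exists>f. f \<in> at K y \<and> c f = \<gamma>" using g by (metis imageE lessThan_iff)
qed

locale S3 = HS H u for H :: "('v, 'e) mgraph" and u :: 'v +
  fixes K :: "('w, 'f) mgraph" and v :: 'w and phi :: "'e \<Rightarrow> 'f"
  assumes cubK: "cubic K" and tcK: "two_connected K" and vV: "v \<in> verts K"
    and bij: "bij_betw phi (at H u) (at K v)" and npK: "\<not> incident_parallel K v"
begin

abbreviation "Av \<equiv> at K v"
abbreviation "G \<equiv> sum3 H K u v phi"
definition b :: "'e \<Rightarrow> 'w" where "b e = other K v (phi e)"
definition B :: "'w set" where "B = b ` Au"

lemma wfK: "wf_graph K" using cubK unfolding cubic_def by auto

lemma Av: assumes "f \<in> Av"
  shows "ends K f = {#v, other K v f#}" "other K v f \<noteq> v" "other K v f \<in> verts K" "f \<in> edges K"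
  using at_props[OF cubK tcK assms] by auto

lemma phiAv: "e \<in> Au \<Longrightarrow> phi e \<in> Av" using bij bij_betwE by blast

lemma phi_ends: "e \<in> Au \<Longrightarrow> ends K (phi e) = {#v, b e#}"
  using Av(1)[OF phiAv] unfolding b_def by simp

lemma b_props: "e \<in> Au \<Longrightarrow> b e \<noteq> v \<and> b e \<in> verts K"
  using Av(2,3)[OF phiAv] unfolding b_def by simp

lemma b_inj: "inj_on b Au"
proof (rule inj_onI)
  fix e1 e2 assume e: "e1 \<in> Au" "e2 \<in> Au" "b e1 = b e2"
  have "ends K (phi e1) = ends K (phi e2)" using phi_ends e by simp
  moreover have "v \<in># ends K (phi e1)" using phi_ends[OF e(1)] by simp
  ultimately have "phi e1 = phi e2"
  proof (rule_tac ccontr)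
    assume h: "ends K (phi e1) = ends K (phi e2)" "v \<in># ends K (phi e1)" "phi e1 \<noteq> phi e2"
    have "incident_parallel K v" unfolding incident_parallel_def
      using h Av(4)[OF phiAv[OF e(1)]] Av(4)[OF phiAv[OF e(2)]] by blast
    thus False using npK by simp
  qed
  thus "e1 = e2" using bij e unfolding bij_betw_def by (meson inj_onD)
qed

lemma cardB: "card B = 3" unfolding B_def using card_image[OF b_inj] cardAu by simp

lemma B_sub: "B \<subseteq> verts K - {v}" unfolding B_def using b_props by (intro image_subsetI) simp

lemma nbr_v: assumes "adj K v y" shows "y \<in> B"
proof -
  obtain f where f: "f \<in> edges K" "ends K f = {#v, y#}" using assms unfolding adj_def by blast
  hence "f \<in> Av" unfolding at_def by simp
  then obtain e where e: "e \<in> Au" "f = phi e" using bij by (metis bij_betw_imp_surj_on imageE)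
  have "{#v, y#} = {#v, b e#}" using phi_ends[OF e(1)] f e by simp
  hence "y = b e" by (auto simp: mset2_eq)
  thus ?thesis unfolding B_def using e by blast
qed

lemma vG: "verts G = Inl ` (verts H - {u}) \<union> Inr ` (verts K - {v})" unfolding sum3_def by simp
lemma eG: "edges G = Inl ` edges H \<union> Inr ` {f \<in> edges K. v \<notin># ends K f}" unfolding sum3_def by simp

lemma endsG_at: "e \<in> Au \<Longrightarrow> ends G (Inl e) = {#Inl (other H u e), Inr (b e)#}"
  unfolding sum3_def at_def b_def by simp

lemma endsG_nat: "e \<notin> Au \<Longrightarrow> e \<in> edges H \<Longrightarrow> ends G (Inl e) = image_mset Inl (ends H e)"
  unfolding sum3_def at_def by simp

lemma endsG_r: "ends G (Inr f) = image_mset Inr (ends K f)"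
  unfolding sum3_def by simp

lemma J1: assumes "x \<noteq> u" "e \<in> edges H"
  shows "Inl x \<in># ends G (Inl e) \<longleftrightarrow> x \<in># ends H e"
proof (cases "e \<in> Au")
  case True thus ?thesis using endsG_at[OF True] Au[OF True] assms by auto
next
  case False
  obtain a c where "ends H e = {#a, c#}" using ends_nat2[OF False assms(2)] by blast
  thus ?thesis using endsG_nat[OF False assms(2)] by auto
qed

lemma J2: "Inl x \<notin># ends G (Inr f)" using endsG_r by auto

lemma J3: assumes "e \<in> edges H"
  shows "Inr y \<in># ends G (Inl e) \<longleftrightarrow> e \<in> Au \<and> b e = y"
proof (cases "e \<in> Au")
  case True thus ?thesis using endsG_at[OF True] by auto
next
  case False
  obtain a c where "ends H e = {#a, c#}" using ends_nat2[OF False assms] by blast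
  thus ?thesis using endsG_nat[OF False assms] False by auto
qed

lemma J4: "Inr y \<in># ends G (Inr f) \<longleftrightarrow> y \<in># ends K f" using endsG_r by auto

lemma G_loopless: assumes "d \<in> edges G" shows "count (ends G d) z \<le> 1"
proof -
  { fix e assume e: "e \<in> edges H" "d = Inl e"
    have ?thesis
    proof (cases "e \<in> Au")
      case True thus ?thesis using endsG_at[OF True] e by auto
    next
      case False
      obtain a c where "ends H e = {#a, c#}" "a \<noteq> c" using ends_nat2[OF False e(1)] by blast
      thus ?thesis using endsG_nat[OF False e(1)] e by auto
    qed }
  moreover
  { fix f assume f: "f \<in> edges K" "d = Inr f"
    obtain a c where ac: "ends K f = {#a, c#}" using ends2[OF wfK f(1)] by blast
    have "a \<noteq> c" using loopfree[OF cubK tcK f(1), of a] ac by auto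
    hence ?thesis using endsG_r ac f by auto }
  ultimately show ?thesis using assms unfolding eG by blast
qed

definition W :: "'w set" where "W = verts K - {v} - B"

end


lemma card_lr: fixes A :: "'a set" and C :: "'b set" assumes "finite A" "finite C" shows "card ((Inl ` A \<union> Inr ` C) :: ('a + 'b) set) = card A + card C"
proof -
  have d: "(Inl ` A :: ('a + 'b) set) \<inter> Inr ` C = {}" by blast
  have "card ((Inl ` A \<union> Inr ` C) :: ('a + 'b) set) = card (Inl ` A :: ('a + 'b) set) + card (Inr ` C :: ('a + 'b) set)"
    using card_Un_disjoint[OF finite_imageI[OF assms(1)] finite_imageI[OF assms(2)] d] .
  also have "card (Inl ` A :: ('a + 'b) set) = card A" by (rule card_image) (simp add: inj_on_def)
  also have "card (Inr ` C :: ('a + 'b) set) = card C" by (rule card_image) (simp add: inj_on_def)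
  finally show ?thesis .
qed

context S3
begin

lemma GM_at_l: assumes "x \<noteq> u" "R \<subseteq> edges H"
  shows "{d \<in> Inl ` R \<union> Inr ` Q'. Inl x \<in># ends G d} = Inl ` {e \<in> R. x \<in># ends H e}"
  using J1[OF assms(1)] J2 assms(2) by auto

lemma GM_at_r: assumes "R \<subseteq> edges H"
  shows "{d \<in> Inl ` R \<union> Inr ` Q'. Inr y \<in># ends G d} =
         Inl ` {e \<in> R \<inter> Au. b e = y} \<union> Inr ` {f \<in> Q'. y \<in># ends K f}"
  using J3 J4 assms by auto

lemma partA:
  assumes pmHu: "pm_index Hu = 4" and pmG: "pm_index G \<ge> 5" and col: "colourable3 K"
  shows "\<not> (\<exists>m. pmatch (adj K) W m)"
proof
  assume "\<exists>m. pmatch (adj K) W m"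
  then obtain m where pm: "pmatch (adj K) W m" by blast
  let ?PP = "\<lambda>k. \<exists>Ms. length Ms = k \<and> (\<forall>M\<in>set Ms. perfect_matching Hu M) \<and> \<Union>(set Ms) = edges Hu"
  obtain Ms0 where Ms0: "\<forall>M\<in>set Ms0. perfect_matching Hu M" "\<Union>(set Ms0) = edges Hu" using Hu_cover by blast
  have "?PP (length Ms0)" using Ms0 by blast
  hence "?PP (LEAST k. ?PP k)" by (rule LeastI)
  hence "?PP (pm_index Hu)" unfolding pm_index_def .
  then obtain Ms where Ms: "length Ms = 4" "\<forall>M\<in>set Ms. perfect_matching Hu M" "\<Union>(set Ms) = edges Hu"
    using pmHu by auto
  obtain c :: "'f \<Rightarrow> nat" where c0: "\<forall>e\<in>edges K. c e < 3"
    and cp: "\<forall>e\<in>edges K. \<forall>e'\<in>edges K. e \<noteq> e' \<and> (\<exists>x. x \<in># ends K e \<and> x \<in># ends K e') \<longrightarrow> c e \<noteq> c e'"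
    using col unfolding colourable3_def by blast
  note cex = colour_at(1)[OF cubK tcK c0 cp] and cun = colour_uniq[OF cp]
  define P where "P = pmE K W m"
  have PK: "P \<subseteq> edges K" unfolding P_def using pmE_sub[OF pm] .
  have Pends: "\<And>f w. f \<in> P \<Longrightarrow> w \<in># ends K f \<Longrightarrow> w \<in> W"
  proof -
    fix f w assume "f \<in> P" "w \<in># ends K f"
    then obtain a where "a \<in> W" "m a \<in> W" "ends K f = {#a, m a#}" "w \<in># ends K f"
      using pmE_ends[OF pm] unfolding P_def by blast
    thus "w \<in> W" by auto
  qed
  have vW: "v \<notin> W" unfolding W_def by blast
  define jj where "jj M = (THE j. t M = {j})" for M
  define Q where "Q M = (if t M = Au then P else {f \<in> edges K. c f = c (phi (jj M)) \<and> v \<notin># ends K f})" for M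
  define GM where "GM M = Inl ` r M \<union> Inr ` Q M" for M
  have PQ: "P \<subseteq> {f \<in> edges K. v \<notin># ends K f}"
  proof
    fix f assume f: "f \<in> P"
    have "v \<notin># ends K f" using Pends[OF f] vW by blast
    thus "f \<in> {f \<in> edges K. v \<notin># ends K f}" using PK f by blast
  qed
  have Qsub: "Q M \<subseteq> {f \<in> edges K. v \<notin># ends K f}" for M
  proof (cases "t M = Au")
    case True thus ?thesis unfolding Q_def using PQ by simp
  next
    case False thus ?thesis unfolding Q_def by (simp add: Collect_mono)
  qed
  have QK: "Q M \<subseteq> edges K" for M using Qsub[of M] by blast
  have fQ: "finite (Q M)" for M using finite_subset[OF QK wfD(2)[OF wfK]] .
  have pmGM: "perfect_matching G (GM M)" if M: "M \<in> set Ms" for M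
  proof -
    have pmM: "perfect_matching Hu M" using Ms(2) M by blast
    have rH: "r M \<subseteq> edges H" using r_sub[OF pmM] .
    have frM: "finite (r M)" using rH wfD(2)[OF wfH] finite_subset by blast
    have tr: "r M \<inter> Au = t M" unfolding r_def t_def by auto
    show ?thesis unfolding perfect_matching_def
    proof (intro conjI ballI allI)
      show "GM M \<subseteq> edges G" unfolding GM_def eG using rH Qsub[of M] by blast
    next
      fix d z assume "d \<in> GM M"
      hence "d \<in> edges G" unfolding GM_def eG using rH Qsub[of M] by blast
      thus "count (ends G d) z \<le> 1" using G_loopless by blast
    next
      fix z assume z: "z \<in> verts G"
      then consider (l) x where "x \<in> verts H - {u}" "z = Inl x" | (rr) y where "y \<in> verts K - {v}" "z = Inr y"
        unfolding vG by blast
      thus "card {d \<in> GM M. z \<in># ends G d} = 1"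
      proof cases
        case l
        have xu: "x \<noteq> u" using l by blast
        let ?S = "{e \<in> r M. x \<in># ends H e}"
        have e1: "{d \<in> GM M. z \<in># ends G d} = Inl ` ?S"
          unfolding GM_def l(2) GM_at_l[OF xu rH] ..
        have "Inl x \<in> verts Hu" using l unfolding vHu by blast
        hence "card {d \<in> M. Inl x \<in># ends Hu d} = 1" using pmM unfolding perfect_matching_def by blast
        hence "card (Inl ` ?S :: ('e + 'e set) set) = 1" using restr_at[OF pmM xu] by simp
        hence "card ?S = 1" by (simp add: card_image)
        thus ?thesis unfolding e1 by (simp add: card_image)
      next
        case rr
        have eq: "{d \<in> GM M. z \<in># ends G d} = Inl ` {e \<in> t M. b e = y} \<union> Inr ` {f \<in> Q M. y \<in># ends K f}"
          unfolding GM_def rr(2) GM_at_r[OF rH] tr ..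
        have fin1: "finite {e \<in> t M. b e = y}" using finAu unfolding t_def by simp
        have fin2: "finite {f \<in> Q M. y \<in># ends K f}" using fQ[of M] by simp
        have yv: "y \<in> verts K" "y \<noteq> v" using rr by auto
        consider (z0) "t M = Au" | (z1) j where "j \<in> Au" "t M = {j}" using types[OF pmM] by blast
        thus ?thesis
        proof cases
          case z0
          hence QP: "Q M = P" unfolding Q_def by simp
          show ?thesis
          proof (cases "y \<in> B")
            case True
            then obtain e0 where e0: "e0 \<in> Au" "y = b e0" unfolding B_def by blast
            have A: "{e \<in> t M. b e = y} = {e0}" using z0 e0 b_inj unfolding inj_on_def by auto
            have Bm: "{f \<in> Q M. y \<in># ends K f} = {}" using QP Pends True unfolding W_def by blast
            show ?thesis unfolding eq A Bm by simp
          next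
            case False
            have yW: "y \<in> W" using False yv unfolding W_def by blast
            have A: "{e \<in> t M. b e = y} = {}" using False unfolding B_def t_def by blast
            have Bm: "{f \<in> Q M. y \<in># ends K f} = {pk K y (m y)}"
              using pmE_at[OF pm yW] QP unfolding P_def by simp
            show ?thesis unfolding eq A Bm by simp
          qed
        next
          case z1
          have jjM: "jj M = j" unfolding jj_def using z1 by simp
          have nA: "t M \<noteq> Au"
          proof
            assume tA: "t M = Au"
            have "card (t M) = 1" using z1(2) by simp
            thus False using cardAu tA by simp
          qed
          have QM: "Q M = {f \<in> edges K. c f = c (phi j) \<and> v \<notin># ends K f}" unfolding Q_def using nA jjM by simp
          have pj: "phi j \<in> Av" using phiAv[OF z1(1)] .
          have pjE: "phi j \<in> edges K" using Av(4)[OF pj] .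
          show ?thesis
          proof (cases "y = b j")
            case True
            have A: "{e \<in> t M. b e = y} = {j}" using z1 True by auto
            have Bm: "{f \<in> Q M. y \<in># ends K f} = {}"
            proof (rule ccontr)
              assume "{f \<in> Q M. y \<in># ends K f} \<noteq> {}"
              then obtain f where f: "f \<in> edges K" "c f = c (phi j)" "v \<notin># ends K f" "y \<in># ends K f"
                using QM by blast
              have "f \<in> at K y" using f unfolding at_def by simp
              moreover have "phi j \<in> at K y" using pjE phi_ends[OF z1(1)] True unfolding at_def by simp
              ultimately have "f = phi j" using cun[OF _ _ f(2)] by blast
              thus False using f(3) phi_ends[OF z1(1)] by simp
            qed
            show ?thesis unfolding eq A Bm by simp
          next
            case False
            have A: "{e \<in> t M. b e = y} = {}" using z1 False by auto
            have "c (phi j) < 3" using c0 pjE by blast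
            then obtain g where g: "g \<in> at K y" "c g = c (phi j)" using cex[OF yv(1)] by blast
            have gE: "g \<in> edges K" and yg: "y \<in># ends K g" using g unfolding at_def by auto
            have vg: "v \<notin># ends K g"
            proof
              assume "v \<in># ends K g"
              hence "g \<in> Av" using gE unfolding at_def by simp
              hence "g = phi j" using cun[OF _ pj g(2)] by blast
              thus False using yg phi_ends[OF z1(1)] False yv(2) by auto
            qed
            have Bm: "{f \<in> Q M. y \<in># ends K f} = {g}"
            proof
              show "{g} \<subseteq> {f \<in> Q M. y \<in># ends K f}" using QM gE g(2) vg yg by simp
              show "{f \<in> Q M. y \<in># ends K f} \<subseteq> {g}"
              proof
                fix f assume "f \<in> {f \<in> Q M. y \<in># ends K f}"
                hence f: "f \<in> edges K" "c f = c (phi j)" "y \<in># ends K f" using QM by auto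
                have "f \<in> at K y" using f unfolding at_def by simp
                thus "f \<in> {g}" using cun[OF _ g(1)] f(2) g(2) by simp
              qed
            qed
            show ?thesis unfolding eq A Bm by simp
          qed
        qed
      qed
    qed
  qed
  have cover: "\<Union>(set (map GM Ms)) = edges G"
  proof
    show "\<Union>(set (map GM Ms)) \<subseteq> edges G"
    proof
      fix d assume "d \<in> \<Union>(set (map GM Ms))"
      then obtain M where "M \<in> set Ms" "d \<in> GM M" by auto
      thus "d \<in> edges G" using pmGM unfolding perfect_matching_def by blast
    qed
  next
    show "edges G \<subseteq> \<Union>(set (map GM Ms))"
    proof
      fix d assume "d \<in> edges G"
      then consider (l) e where "e \<in> edges H" "d = Inl e" | (rr) f where "f \<in> edges K" "v \<notin># ends K f" "d = Inr f"
        unfolding eG by blast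
      thus "d \<in> \<Union>(set (map GM Ms))"
      proof cases
        case l
        have "Inl e \<in> edges Hu" using l unfolding eHu by blast
        then obtain M where "M \<in> set Ms" "Inl e \<in> M" using Ms(3) by blast
        thus ?thesis using l unfolding GM_def r_def by auto
      next
        case rr
        have "c f < 3" using c0 rr by blast
        then obtain f' where f': "f' \<in> Av" "c f' = c f" using cex[OF vV] by blast
        then obtain j where j: "j \<in> Au" "f' = phi j" using bij by (metis bij_betw_imp_surj_on imageE)
        obtain k l where kl: "Au - {j} = {k, l}" "k \<noteq> l" "k \<in> Au" "l \<in> Au"
        proof -
          have "card (Au - {j}) = 2" using cardAu j(1) finAu by simp
          thus ?thesis using that by (auto simp: card_2_iff)
        qed
        have sT: "Au - {j} \<in> T" unfolding T_def using kl by blast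
        hence "Inr (Au - {j}) \<in> edges Hu" unfolding eHu by blast
        then obtain M where M: "M \<in> set Ms" "Inr (Au - {j}) \<in> M" using Ms(3) by blast
        have "t M = Au - (Au - {j})" using tri[OF Ms(2)[rule_format, OF M(1)] sT M(2)] .
        hence tM: "t M = {j}" using j(1) by auto
        hence "jj M = j" unfolding jj_def by simp
        moreover have "t M \<noteq> Au"
        proof
          assume tA: "t M = Au"
          have "card (t M) = 1" using tM by simp
          thus False using cardAu tA by simp
        qed
        ultimately have "f \<in> Q M" unfolding Q_def using rr f' j by simp
        thus ?thesis using M rr unfolding GM_def by auto
      qed
    qed
  qed
  have "pm_index G \<le> length (map GM Ms)" unfolding pm_index_def
  proof (rule Least_le)
    have "\<forall>M'\<in>set (map GM Ms). perfect_matching G M'" using pmGM by auto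
    thus "\<exists>Ms'. length Ms' = length (map GM Ms) \<and> (\<forall>M\<in>set Ms'. perfect_matching G M) \<and> \<Union>(set Ms') = edges G"
      using cover by blast
  qed
  thus False using Ms(1) pmG by simp
qed

end


lemma contract_ok:
  assumes cub: "cubic K" and tc: "two_connected K" and UV: "U \<subseteq> verts K"
    and ind: "\<forall>e\<in>edges K. \<not> set_mset (ends K e) \<subseteq> U"
    and cut3: "\<forall>C\<in>cmps (adj K) (verts K - U). card (cut K C) = 3"
  shows "cubic (contract K U) \<and>
     (\<forall>e\<in>edges (contract K U). \<exists>a\<in>U. \<exists>C\<in>comps (del_verts K U).
         ends (contract K U) e = {# Inl a, Inr C #})"
proof -
  have wf: "wf_graph K" using cub unfolding cubic_def by auto
  define Z where "Z = verts K - U"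
  have fV: "finite (verts K)" using wfD(1)[OF wf] .
  have fU: "finite U" using finite_subset[OF UV fV] .
  have cps: "comps (del_verts K U) = cmps (adj K) Z" unfolding Z_def using comps_del[OF wf] .
  have cof: "comp_of (del_verts K U) x = cmp (adj K) Z x" if "x \<in> Z" for x
    using comp_of_del[OF wf] that unfolding Z_def by blast
  define phi where "phi x = (if x \<in> U then Inl x else Inr (comp_of (del_verts K U) x))" for x
  have ec: "edges (contract K U) = {e \<in> edges K. \<not> (\<exists>C\<in>cmps (adj K) Z. set_mset (ends K e) \<subseteq> C)}"
    unfolding contract_def cps by simp
  have ndc: "ends (contract K U) e = image_mset phi (ends K e)" for e
    unfolding contract_def phi_def by simp
  have vc: "verts (contract K U) = Inl ` U \<union> Inr ` cmps (adj K) Z" unfolding contract_def cps by simp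
  have ced: "e \<in> edges (contract K U) \<longleftrightarrow> (\<exists>a b. ends K e = {#a, b#} \<and> a \<in> U \<and> b \<in> Z) \<and> e \<in> edges K" for e
  proof
    assume e: "e \<in> edges (contract K U)"
    hence eE: "e \<in> edges K" and nC: "\<not> (\<exists>C\<in>cmps (adj K) Z. set_mset (ends K e) \<subseteq> C)" using ec by auto
    obtain a b where ab: "ends K e = {#a, b#}" "a \<in> verts K" "b \<in> verts K" using ends2[OF wf eE] by blast
    have nab: "\<not> (a \<in> U \<and> b \<in> U)" using ind eE ab by auto
    have nZZ: "\<not> (a \<in> Z \<and> b \<in> Z)"
    proof
      assume h: "a \<in> Z \<and> b \<in> Z"
      have "adj K a b" unfolding adj_def using eE ab by blast
      hence "b \<in> cmp (adj K) Z a" using cmps_closed[OF adj_sym cmp_in_cmps[of a Z] cmp_self[of a Z]] h by blast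
      hence "set_mset (ends K e) \<subseteq> cmp (adj K) Z a" using ab cmp_self[of a Z] h by auto
      thus False using nC cmp_in_cmps[of a Z] h by blast
    qed
    have "(a \<in> U \<and> b \<in> Z) \<or> (b \<in> U \<and> a \<in> Z)" using nab nZZ ab unfolding Z_def by blast
    thus "(\<exists>a b. ends K e = {#a, b#} \<and> a \<in> U \<and> b \<in> Z) \<and> e \<in> edges K"
      using ab eE by (metis add_mset_commute)
  next
    assume "(\<exists>a b. ends K e = {#a, b#} \<and> a \<in> U \<and> b \<in> Z) \<and> e \<in> edges K"
    then obtain a b where ab: "ends K e = {#a, b#}" "a \<in> U" "b \<in> Z" "e \<in> edges K" by blast
    have "\<not> (\<exists>C\<in>cmps (adj K) Z. set_mset (ends K e) \<subseteq> C)"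
      using ab cmps_sub unfolding Z_def by fastforce
    thus "e \<in> edges (contract K U)" using ec ab by blast
  qed
  have endc: "ends (contract K U) e = {#Inl a, Inr (cmp (adj K) Z b)#}"
    if "ends K e = {#a, b#}" "a \<in> U" "b \<in> Z" for e a b
  proof -
    have "phi a = Inl a" unfolding phi_def using that by simp
    moreover have "phi b = Inr (cmp (adj K) Z b)" unfolding phi_def using that cof Z_def by auto
    ultimately show ?thesis using ndc that by simp
  qed
  have bip: "\<forall>e\<in>edges (contract K U). \<exists>a\<in>U. \<exists>C\<in>comps (del_verts K U). ends (contract K U) e = {# Inl a, Inr C #}"
  proof
    fix e assume "e \<in> edges (contract K U)"
    then obtain a b where ab: "ends K e = {#a, b#}" "a \<in> U" "b \<in> Z" using ced by blast
    thus "\<exists>a\<in>U. \<exists>C\<in>comps (del_verts K U). ends (contract K U) e = {# Inl a, Inr C #}"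
      using endc[OF ab] cmp_in_cmps[OF ab(3)] cps by blast
  qed
  have fEc: "finite (edges (contract K U))" using ec wfD(2)[OF wf] by simp
  have wfc: "wf_graph (contract K U)" unfolding wf_graph_def
  proof (intro conjI ballI)
    show "finite (verts (contract K U))" unfolding vc using fU cmps_finite[of Z "adj K"] fV Z_def by simp
    show "finite (edges (contract K U))" using fEc .
  next
    fix e assume "e \<in> edges (contract K U)"
    then obtain a b where ab: "ends K e = {#a, b#}" "a \<in> U" "b \<in> Z" using ced by blast
    show "size (ends (contract K U) e) = 2" using endc[OF ab] by simp
    show "set_mset (ends (contract K U) e) \<subseteq> verts (contract K U)"
      using endc[OF ab] ab cmp_in_cmps[OF ab(3)] unfolding vc by auto
  qed
  have degl: "deg (contract K U) (Inl a) = 3" if a: "a \<in> U" for a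
  proof -
    have "deg (contract K U) (Inl a) = (\<Sum>e\<in>edges (contract K U). count (ends K e) a)"
      unfolding deg_def
    proof (rule sum.cong)
      fix e assume "e \<in> edges (contract K U)"
      then obtain a' b where ab: "ends K e = {#a', b#}" "a' \<in> U" "b \<in> Z" using ced by blast
      have "b \<noteq> a" using ab a unfolding Z_def by blast
      thus "count (ends (contract K U) e) (Inl a) = count (ends K e) a" using endc[OF ab] ab by auto
    qed simp
    also have "\<dots> = (\<Sum>e\<in>edges K. count (ends K e) a)"
    proof (rule sum.mono_neutral_left)
      show "finite (edges K)" using wfD(2)[OF wf] .
      show "edges (contract K U) \<subseteq> edges K" using ced by blast
      show "\<forall>e\<in>edges K - edges (contract K U). count (ends K e) a = 0"
      proof
        fix e assume e: "e \<in> edges K - edges (contract K U)"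
        obtain p q where pq: "ends K e = {#p, q#}" "p \<in> verts K" "q \<in> verts K" using ends2[OF wf] e by blast
        have "\<not> (p \<in> U \<and> q \<in> Z)" "\<not> (q \<in> U \<and> p \<in> Z)" using ced e pq by (auto simp: add_mset_commute)
        moreover have "\<not> (p \<in> U \<and> q \<in> U)" using ind e pq by auto
        ultimately have "p \<notin> U" "q \<notin> U" using pq unfolding Z_def by auto
        thus "count (ends K e) a = 0" using pq a by auto
      qed
    qed
    also have "\<dots> = 3" using cub a UV unfolding cubic_def deg_def by auto
    finally show ?thesis .
  qed
  have degr: "deg (contract K U) (Inr C) = 3" if C: "C \<in> cmps (adj K) Z" for C
  proof -
    have CZ: "C \<subseteq> Z" using cmps_sub[OF C] .
    have "deg (contract K U) (Inr C) = (\<Sum>e\<in>edges (contract K U). if e \<in> cut K C then 1 else 0)"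
      unfolding deg_def
    proof (rule sum.cong)
      fix e assume "e \<in> edges (contract K U)"
      then obtain a b where ab: "ends K e = {#a, b#}" "a \<in> U" "b \<in> Z" using ced by blast
      have "a \<notin> C" using CZ ab unfolding Z_def by blast
      have "cmp (adj K) Z b = C \<longleftrightarrow> b \<in> C"
        using cmps_elem[OF adj_sym C] cmp_self[OF ab(3)] by metis
      moreover have "e \<in> cut K C \<longleftrightarrow> b \<in> C" unfolding cut_def using ab \<open>a \<notin> C\<close> ced \<open>e \<in> edges (contract K U)\<close> by auto
      ultimately show "count (ends (contract K U) e) (Inr C) = (if e \<in> cut K C then 1 else 0)"
        using endc[OF ab] by auto
    qed simp
    also have "\<dots> = card {e \<in> edges (contract K U). e \<in> cut K C}"
      using sum.inter_filter[OF fEc, of "\<lambda>_. 1::nat" "\<lambda>e. e \<in> cut K C"] by simp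
    also have "{e \<in> edges (contract K U). e \<in> cut K C} = cut K C"
    proof
      show "cut K C \<subseteq> {e \<in> edges (contract K U). e \<in> cut K C}"
      proof
        fix e assume e: "e \<in> cut K C"
        obtain a b where ab: "ends K e = {#a, b#}" "a \<in> C" "b \<in> verts K - Z"
          using cut_cmp[OF wf _ C e] Z_def by blast
        have "b \<in> U" "a \<in> Z" using ab CZ unfolding Z_def by auto
        moreover have "e \<in> edges K" using e unfolding cut_def by simp
        ultimately have "e \<in> edges (contract K U)" using ced ab by (metis add_mset_commute)
        thus "e \<in> {e \<in> edges (contract K U). e \<in> cut K C}" using e by simp
      qed
    qed auto
    finally show ?thesis using cut3 C Z_def by simp
  qed
  have "cubic (contract K U)" unfolding cubic_def
  proof (intro conjI ballI)
    show "wf_graph (contract K U)" using wfc .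
    show "verts (contract K U) \<noteq> {}"
    proof -
      have "verts K \<noteq> {}" using cub unfolding cubic_def by auto
      then obtain x where "x \<in> verts K" by blast
      thus ?thesis unfolding vc Z_def using cmp_in_cmps[of x "verts K - U" "adj K"] by (cases "x \<in> U") auto
    qed
  next
    fix z assume "z \<in> verts (contract K U)"
    thus "deg (contract K U) z = 3" unfolding vc using degl degr by auto
  qed
  thus ?thesis using bip by blast
qed


lemma all3: assumes "finite F" "\<forall>x\<in>F. f x \<ge> (3::nat)" "sum f F \<le> 3 * card F"
  shows "\<forall>x\<in>F. f x = 3"
proof (rule ccontr)
  assume "\<not> (\<forall>x\<in>F. f x = 3)"
  then obtain x0 where x0: "x0 \<in> F" "f x0 \<noteq> 3" by blast
  hence "f x0 \<ge> 4" using assms(2) by fastforce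
  have "sum f F = f x0 + sum f (F - {x0})" using sum.remove[OF assms(1) x0(1)] .
  moreover have "sum f (F - {x0}) \<ge> (\<Sum>x\<in>F - {x0}. 3)" using assms(2) by (intro sum_mono) auto
  moreover have "(\<Sum>x\<in>F - {x0}. (3::nat)) = 3 * (card F - 1)" using x0 assms(1) by simp
  moreover have "card F \<ge> 1" using x0 assms(1) by (metis One_nat_def Suc_leI card_gt_0_iff empty_iff)
  ultimately show False using assms(3) \<open>f x0 \<ge> 4\<close> by linarith
qed

lemma sum23: "finite F \<Longrightarrow> (\<Sum>C\<in>F. if odd (g C) then 3 else (2::nat)) = 2 * card F + card {C\<in>F. odd (g C)}"
proof -
  assume f: "finite F"
  have "(\<Sum>C\<in>F. if odd (g C) then 3 else (2::nat)) = (\<Sum>C\<in>F. 2 + (if odd (g C) then 1 else 0))"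
    by (rule sum.cong) auto
  also have "\<dots> = (\<Sum>C\<in>F. 2) + (\<Sum>C\<in>F. if odd (g C) then 1 else (0::nat))" by (rule sum.distrib)
  also have "(\<Sum>C\<in>F. (2::nat)) = 2 * card F" by simp
  also have "(\<Sum>C\<in>F. if odd (g C) then 1 else (0::nat)) = card {C\<in>F. odd (g C)}"
    using sum.inter_filter[OF f, of "\<lambda>_. 1::nat" "\<lambda>C. odd (g C)"] by simp
  finally show ?thesis .
qed

context S3
begin

lemma partB:
  assumes viol: "\<exists>S\<subseteq>W. \<not> oddc (adj K) (W - S) \<le> card S"
  shows "\<exists>U. bipartising_set K U \<and> {v} \<in> comps (del_verts K U)"
proof -
  obtain S where SW: "S \<subseteq> W" and big: "oddc (adj K) (W - S) > card S" using viol by auto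
  have fV: "finite (verts K)" using wfD(1)[OF wfK] .
  define U where "U = S \<union> B"
  define Y where "Y = insert v U"
  define X where "X = W - S"
  have SV: "S \<subseteq> verts K" using SW unfolding W_def by blast
  have fS: "finite S" using finite_subset[OF SV fV] .
  have fB: "finite B" using cardB by (metis card.infinite zero_neq_numeral)
  have SB: "S \<inter> B = {}" using SW unfolding W_def by blast
  have vU: "v \<notin> U" using SW B_sub unfolding U_def W_def by blast
  have UV: "U \<subseteq> verts K" using SV B_sub unfolding U_def by blast
  have YV: "Y \<subseteq> verts K" using UV vV unfolding Y_def by blast
  have fU: "finite U" using fS fB U_def by simp
  have cU: "card U = card S + 3" unfolding U_def using card_Un_disjoint[OF fS fB SB] cardB by simp
  have cY: "card Y = card S + 4" unfolding Y_def using cU vU fU by simp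
  have XY: "X = verts K - Y" unfolding X_def Y_def U_def W_def by blast
  have fX: "finite X" using XY fV by simp
  have "even (oddc (adj K) X) = even (card X)" using oddc_parity[OF adj_sym fX] .
  moreover have "card X = card (verts K) - card Y" using XY card_Diff_subset[OF finite_subset[OF YV fV] YV] by simp
  moreover have "card Y \<le> card (verts K)" using card_mono[OF fV YV] .
  ultimately have "even (oddc (adj K) X) = even (card S)" using even_verts[OF cubK] cY by (simp add: even_diff_nat)
  hence o2: "oddc (adj K) X \<ge> card S + 2" using par2 big X_def by blast
  let ?cs = "cmps (adj K) X"
  have fcs: "finite ?cs" using cmps_finite[OF fX] .
  have h: "3 * card Y = card (cut K Y) + 2 * card (inn K Y)" using handshake_set[OF cubK YV] .
  have innY: "Av \<union> inn K U \<subseteq> inn K Y"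
  proof
    fix e assume "e \<in> Av \<union> inn K U"
    then consider "e \<in> Av" | "e \<in> inn K U" by blast
    thus "e \<in> inn K Y"
    proof cases
      case 1
      have "ends K e = {#v, other K v e#}" "e \<in> edges K" using Av[OF 1] by auto
      moreover have "other K v e \<in> B" using nbr_v calculation unfolding adj_def by blast
      ultimately show ?thesis unfolding inn_def Y_def U_def by simp
    next
      case 2
      hence eE: "e \<in> edges K" and c2: "cnt U (ends K e) = 2" unfolding inn_def by auto
      obtain p q where "ends K e = {#p, q#}" using ends2[OF wfK eE] by blast
      thus ?thesis using eE c2 unfolding inn_def Y_def by (auto split: if_splits)
    qed
  qed
  have dAv: "Av \<inter> inn K U = {}"
  proof -
    { fix e assume e: "e \<in> Av" "e \<in> inn K U"
      have "ends K e = {#v, other K v e#}" using Av[OF e(1)] by auto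
      hence "cnt U (ends K e) \<le> 1" using vU by simp
      hence False using e(2) unfolding inn_def by simp }
    thus ?thesis by blast
  qed
  have fin_inn: "finite (inn K C)" for C unfolding inn_def using wfD(2)[OF wfK] by simp
  have fAv: "finite Av" using card_at[OF cubK tcK vV] by (metis card.infinite zero_neq_numeral)
  have "card (inn K Y) \<ge> 3 + card (inn K U)"
  proof -
    have "card (Av \<union> inn K U) = card Av + card (inn K U)" using card_Un_disjoint[OF fAv fin_inn dAv] .
    moreover have "card (Av \<union> inn K U) \<le> card (inn K Y)" using card_mono[OF fin_inn innY] .
    ultimately show ?thesis using card_at[OF cubK tcK vV] by simp
  qed
  hence cutY: "card (cut K Y) + 2 * card (inn K U) \<le> 3 * card S + 6" using h cY by simp
  have cs_ok: "C \<subseteq> verts K \<and> C \<noteq> {} \<and> verts K - C \<noteq> {}" if C: "C \<in> ?cs" for C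
  proof -
    have "C \<subseteq> X" using cmps_sub[OF C] .
    hence "v \<notin> C" "C \<subseteq> verts K" using XY unfolding Y_def by auto
    thus ?thesis using cmps_ne[OF C] vV by blast
  qed
  have lb: "(\<Sum>C\<in>?cs. if odd (card C) then 3 else 2) \<le> (\<Sum>C\<in>?cs. card (cut K C))"
  proof (rule sum_mono)
    fix C assume C: "C \<in> ?cs"
    show "(if odd (card C) then 3 else 2) \<le> card (cut K C)"
      using cut_ge2[OF cubK tcK] cs_ok[OF C] by auto
  qed
  have sumeq: "(\<Sum>C\<in>?cs. card (cut K C)) = card (cut K Y)" using cut_sum[OF wfK YV] XY by simp
  have s23: "(\<Sum>C\<in>?cs. if odd (card C) then 3 else (2::nat)) = 2 * card ?cs + oddc (adj K) X"
    using sum23[OF fcs, of card] unfolding oddc_def by simp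
  have oc: "oddc (adj K) X \<le> card ?cs" unfolding oddc_def using fcs by (intro card_mono) auto
  have inn0: "card (inn K U) = 0" and ncs: "card ?cs = oddc (adj K) X"
    and s3: "(\<Sum>C\<in>?cs. card (cut K C)) \<le> 3 * card ?cs"
    using lb sumeq s23 cutY o2 oc by linarith+
  have allodd: "{C\<in>?cs. odd (card C)} = ?cs"
    using card_subset_eq[OF fcs, of "{C\<in>?cs. odd (card C)}"] ncs unfolding oddc_def by auto
  have ge3: "\<forall>C\<in>?cs. card (cut K C) \<ge> 3"
  proof
    fix C assume C: "C \<in> ?cs"
    hence "odd (card C)" using allodd by blast
    thus "card (cut K C) \<ge> 3" using cut_ge2(2)[OF cubK tcK] cs_ok[OF C] by blast
  qed
  have eq3: "\<forall>C\<in>?cs. card (cut K C) = 3" using all3[OF fcs ge3 s3] .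
  have innU: "inn K U = {}" using inn0 fin_inn by simp
  have ind: "\<forall>e\<in>edges K. \<not> set_mset (ends K e) \<subseteq> U"
  proof (intro ballI notI)
    fix e assume e: "e \<in> edges K" "set_mset (ends K e) \<subseteq> U"
    obtain p q where "ends K e = {#p, q#}" using ends2[OF wfK e(1)] by blast
    hence "e \<in> inn K U" using e unfolding inn_def by simp
    thus False using innU by simp
  qed
  define Z where "Z = verts K - U"
  have ZX: "Z = insert v X" using XY vV vU unfolding Y_def Z_def by blast
  have vZ: "v \<in> Z" using ZX by simp
  have cv: "cmp (adj K) Z v = {v}"
  proof -
    have "cmp (adj K) Z v = cmp (adj K) {v} v"
    proof (rule cmp_restrict)
      show "{v} \<subseteq> Z" using vZ by simp
      show "v \<in> {v}" by simp
      show "\<forall>a\<in>{v}. \<forall>b\<in>Z. adj K a b \<longrightarrow> b \<in> {v}"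
        using nbr_v unfolding Z_def U_def by blast
    qed
    also have "\<dots> = {v}" unfolding cmp_def by auto
    finally show ?thesis .
  qed
  have vC: "{v} \<in> cmps (adj K) Z" using cmp_in_cmps[OF vZ, of "adj K"] unfolding cv .
  have "cmps (adj K) (Z - {v}) = (cmps (adj K) Z - {{v}}) \<union> cmps (adj K) ({v} - {v})"
    using cmps_local[OF adj_sym vC] by blast
  moreover have "Z - {v} = X" using ZX XY unfolding Y_def by blast
  moreover have "cmps (adj K) ({} :: 'w set) = {}" unfolding cmps_def by simp
  ultimately have "cmps (adj K) X = cmps (adj K) Z - {{v}}" by simp
  hence csZ: "cmps (adj K) Z = insert {v} (cmps (adj K) X)" using vC by blast
  have cutv: "card (cut K {v}) = 3"
  proof -
    have "{v} \<subseteq> verts K" using vV by simp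
    hence "3 * card {v} = card (cut K {v}) + 2 * card (inn K {v})" using handshake_set[OF cubK] by blast
    moreover have "inn K {v} = {}"
    proof -
      { fix e assume e: "e \<in> inn K {v}"
        hence eE: "e \<in> edges K" and "cnt {v} (ends K e) = 2" unfolding inn_def by auto
        obtain p q where pq: "ends K e = {#p, q#}" using ends2[OF wfK eE] by blast
        hence "p = v" "q = v" using \<open>cnt {v} (ends K e) = 2\<close> by (auto split: if_splits)
        hence "count (ends K e) v = 2" using pq by simp
        hence False using loopfree[OF cubK tcK eE, of v] by simp }
      thus ?thesis by blast
    qed
    ultimately show ?thesis by simp
  qed
  have cut3: "\<forall>C\<in>cmps (adj K) (verts K - U). card (cut K C) = 3"
    using csZ eq3 cutv unfolding Z_def by auto
  have co: "cubic (contract K U) \<and> (\<forall>e\<in>edges (contract K U). \<exists>a\<in>U. \<exists>C\<in>comps (del_verts K U).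
         ends (contract K U) e = {# Inl a, Inr C #})"
    using contract_ok[OF cubK tcK UV ind cut3] .
  have "bipartising_set K U" unfolding bipartising_set_def independent_def
    using co UV ind cU by auto
  moreover have "{v} \<in> comps (del_verts K U)" using comps_del[OF wfK] vC unfolding Z_def by simp
  ultimately show ?thesis by blast
qed

end


theorem theorem6p9:
  fixes H :: "('v, 'e) mgraph" and K :: "('w, 'f) mgraph"
    and u :: 'v and v :: 'w and phi :: "'e \<Rightarrow> 'f"
  assumes "cubic H" and "two_connected H" and "cubic K" and "two_connected K"
    and "u \<in> verts H" and "v \<in> verts K"
    and "bij_betw phi (at H u) (at K v)"
    and "\<not> dipole3 H" and "\<not> dipole3 K"
    and "\<not> incident_parallel H u" and "\<not> incident_parallel K v"
    and "pm_index H \<ge> 5" and "colourable3 K" and "apex H u"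
    and "pm_index (sum3 H K u v phi) \<ge> 5"
  shows "quasi_bipartite K \<and>
         (\<exists>U. bipartising_set K U \<and> {v} \<in> comps (del_verts K U))"
proof -
  interpret S3 H u K v phi
    by unfold_locales (use assms in auto)
  have pmHu: "pm_index (inflate H u) = 4" using assms(14) unfolding apex_def by blast
  have nopm: "\<not> (\<exists>m. pmatch (adj K) W m)" using partA[OF pmHu assms(15) assms(13)] .
  have fW: "finite W" unfolding W_def using wfD(1)[OF wfK] by simp
  have viol: "\<exists>S\<subseteq>W. \<not> oddc (adj K) (W - S) \<le> card S"
  proof (rule ccontr)
    assume "\<not> (\<exists>S\<subseteq>W. \<not> oddc (adj K) (W - S) \<le> card S)"
    hence "\<forall>S\<subseteq>W. oddc (adj K) (W - S) \<le> card S" by blast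
    thus False using tutte[OF adj_sym fW] nopm by blast
  qed
  obtain U where U: "bipartising_set K U" "{v} \<in> comps (del_verts K U)" using partB[OF viol] by blast
  have "quasi_bipartite K" unfolding quasi_bipartite_def using assms(3,4) U(1) by blast
  thus ?thesis using U by blast
qed


end
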